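(* Let $\mathbf a_0\in(0,\infty)^n$ lie in the interior of the domain of $\Phi$. The Frame condition (FC) holds at $\mathbf a_0$ if and only if $\Gamma_{ij}(\mathbf a_0)=0$ for all $i\neq j$ and the ratio $\tilde g_i(\mathbf a_0)/\Gamma_{ii}(\mathbf a_0)$ does not depend on $i\in\{1,\dots,n\}$ (its common value then being $\lambda(\mathbf a_0)$).
   Context: Multi-species zero-range setting: rates $g_1,\dots,g_n$ on $\mathbb Z_+^n$ satisfying the compatibility condition (INV) $g_i(\mathbf k)/g_i(\mathbf k-e_j)=g_j(\mathbf k)/g_j(\mathbf k-e_i)$ ($i\ne j$, $k^i,k^j>0$), so that product invariant measures $\nu_{\mathbf a}$ indexed by density $\mathbf a$ exist (one-site marginal proportional to $\boldsymbol\varphi^{\mathbf k}/\mathbf g!(\mathbf k)$ with fugacity $\boldsymbol\varphi=\Phi(\mathbf a)$). $\tilde g_i(\mathbf a)=E_{\nu_{\mathbf a}}[g_i(\boldsymbol\alpha(0))]$ and $\Gamma(\mathbf a)$ is the covariance matrix of $\boldsymbol\alpha(0)$ under $\nu_{\mathbf a}$. Frame condition (FC) at $\mathbf a_0$: there is $\lambda=\lambda(\mathbf a_0)$ with $\partial_{a^i}\tilde g_i(\mathbf a_0)=\lambda$ for every $i$ and $\partial_{a^j}\tilde g_i(\mathbf a_0)=0$ for all $i\ne j$. *)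

theory Defs
  imports "HOL-Analysis.Analysis"
begin

text \<open>Multi-species zero-range process with n species, indexed by a finite type 'n.
  One-site configurations are k :: 'n \<Rightarrow> nat (an element of Z_+^n).
  Rates: g i k is the rate g_i(k).\<close>

definition dec :: "('n \<Rightarrow> nat) \<Rightarrow> 'n \<Rightarrow> ('n \<Rightarrow> nat)" where
  "dec k j = k(j := k j - 1)"

definition zr_rates :: "('n \<Rightarrow> ('n \<Rightarrow> nat) \<Rightarrow> real) \<Rightarrow> bool" where
  "zr_rates g \<longleftrightarrow> (\<forall>i k. (k i = 0 \<longrightarrow> g i k = 0) \<and> (0 < k i \<longrightarrow> 0 < g i k))"

definition INV :: "('n \<Rightarrow> ('n \<Rightarrow> nat) \<Rightarrow> real) \<Rightarrow> bool" where
  "INV g \<longleftrightarrow> (\<forall>i j k. i \<noteq> j \<and> 0 < k i \<and> 0 < k j \<longrightarrow>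
      g i k / g i (dec k j) = g j k / g j (dec k i))"

definition gfact :: "('n \<Rightarrow> ('n \<Rightarrow> nat) \<Rightarrow> real) \<Rightarrow> ('n \<Rightarrow> nat) \<Rightarrow> real" where
  "gfact g = (THE F. F (\<lambda>_. 0) = 1 \<and> (\<forall>k i. 0 < k i \<longrightarrow> F k = g i k * F (dec k i)))"

definition wt :: "('n::finite \<Rightarrow> ('n \<Rightarrow> nat) \<Rightarrow> real) \<Rightarrow> real^'n \<Rightarrow> ('n \<Rightarrow> nat) \<Rightarrow> real" where
  "wt g phi k = (\<Prod>i\<in>UNIV. (phi $ i) ^ k i) / gfact g k"

definition Zpart :: "('n::finite \<Rightarrow> ('n \<Rightarrow> nat) \<Rightarrow> real) \<Rightarrow> real^'n \<Rightarrow> real" where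
  "Zpart g phi = infsum (wt g phi) UNIV"

definition Efug :: "('n::finite \<Rightarrow> ('n \<Rightarrow> nat) \<Rightarrow> real) \<Rightarrow> real^'n \<Rightarrow> (('n \<Rightarrow> nat) \<Rightarrow> real) \<Rightarrow> real" where
  "Efug g phi f = infsum (\<lambda>k. f k * wt g phi k) UNIV / Zpart g phi"

definition is_fugacity :: "('n::finite \<Rightarrow> ('n \<Rightarrow> nat) \<Rightarrow> real) \<Rightarrow> real^'n \<Rightarrow> real^'n \<Rightarrow> bool" where
  "is_fugacity g a phi \<longleftrightarrow> (\<forall>i. 0 \<le> phi $ i) \<and> wt g phi summable_on UNIV \<and>
     (\<forall>i. (\<lambda>k. real (k i) * wt g phi k) summable_on UNIV) \<and>
     (\<forall>i. Efug g phi (\<lambda>k. real (k i)) = a $ i)"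

definition Phi_dom :: "('n::finite \<Rightarrow> ('n \<Rightarrow> nat) \<Rightarrow> real) \<Rightarrow> (real^'n) set" where
  "Phi_dom g = {a. \<exists>phi. is_fugacity g a phi}"

definition Phi :: "('n::finite \<Rightarrow> ('n \<Rightarrow> nat) \<Rightarrow> real) \<Rightarrow> real^'n \<Rightarrow> real^'n" where
  "Phi g a = (THE phi. is_fugacity g a phi)"

definition Enu :: "('n::finite \<Rightarrow> ('n \<Rightarrow> nat) \<Rightarrow> real) \<Rightarrow> real^'n \<Rightarrow> (('n \<Rightarrow> nat) \<Rightarrow> real) \<Rightarrow> real" where
  "Enu g a f = Efug g (Phi g a) f"

definition gtilde :: "('n::finite \<Rightarrow> ('n \<Rightarrow> nat) \<Rightarrow> real) \<Rightarrow> 'n \<Rightarrow> real^'n \<Rightarrow> real" where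
  "gtilde g i a = Enu g a (g i)"

definition Gamma :: "('n::finite \<Rightarrow> ('n \<Rightarrow> nat) \<Rightarrow> real) \<Rightarrow> real^'n \<Rightarrow> 'n \<Rightarrow> 'n \<Rightarrow> real" where
  "Gamma g a i j = Enu g a (\<lambda>k. real (k i) * real (k j))
      - Enu g a (\<lambda>k. real (k i)) * Enu g a (\<lambda>k. real (k j))"

definition has_partial :: "(real^'n \<Rightarrow> real) \<Rightarrow> 'n::finite \<Rightarrow> real \<Rightarrow> real^'n \<Rightarrow> bool" where
  "has_partial f j D a0 \<longleftrightarrow> ((\<lambda>t. f (a0 + t *\<^sub>R axis j 1)) has_real_derivative D) (at 0)"

definition FC_with :: "('n::finite \<Rightarrow> ('n \<Rightarrow> nat) \<Rightarrow> real) \<Rightarrow> real^'n \<Rightarrow> real \<Rightarrow> bool" where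
  "FC_with g a0 lam \<longleftrightarrow>
     (\<forall>i. has_partial (gtilde g i) i lam a0) \<and>
     (\<forall>i j. i \<noteq> j \<longrightarrow> has_partial (gtilde g i) j 0 a0)"

definition FC :: "('n::finite \<Rightarrow> ('n \<Rightarrow> nat) \<Rightarrow> real) \<Rightarrow> real^'n \<Rightarrow> bool" where
  "FC g a0 \<longleftrightarrow> (\<exists>lam. FC_with g a0 lam)"

end

theory Submission
  imports Defs
begin

lemma real_summable_dom:
  fixes f g :: "'a \<Rightarrow> real"
  assumes "g summable_on A" "\<And>x. x \<in> A \<Longrightarrow> \<bar>f x\<bar> \<le> g x"
  shows "f summable_on A"
proof -
  have "(\<lambda>x. norm (f x)) summable_on A"
    by (rule Infinite_Sum.abs_summable_on_comparison_test'[OF assms(1)]) (use assms(2) in simp)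
  then show ?thesis by (rule abs_summable_summable)
qed

lemma infsum_ge_term:
  fixes f :: "'a \<Rightarrow> real"
  assumes "f summable_on UNIV" "\<And>x. 0 \<le> f x"
  shows "f a \<le> infsum f UNIV"
proof -
  have "f summable_on (UNIV - {a})" using assms(1) summable_on_subset by blast
  then have "infsum f (insert a (UNIV - {a})) = f a + infsum f (UNIV - {a})"
    by (rule infsum_insert) auto
  moreover have "insert a (UNIV - {a}) = UNIV" by auto
  moreover have "0 \<le> infsum f (UNIV - {a})" using assms(2) by (simp add: infsum_nonneg)
  ultimately show ?thesis by simp
qed

lemma infsum_pos_term:
  fixes f :: "'a \<Rightarrow> real"
  assumes "f summable_on UNIV" "\<And>x. 0 \<le> f x" "0 < f a"
  shows "0 < infsum f UNIV"
  using infsum_ge_term[OF assms(1,2), of a] assms(3) by linarith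

lemma infsum_diff_real:
  fixes f g :: "'a \<Rightarrow> real"
  assumes "f summable_on A" "g summable_on A"
  shows "infsum (\<lambda>x. f x - g x) A = infsum f A - infsum g A"
proof -
  have "(\<lambda>x. - g x) summable_on A" using summable_on_cmult_left[OF assms(2), of "-1"] by simp
  then have "infsum (\<lambda>x. f x + - g x) A = infsum f A + infsum (\<lambda>x. - g x) A"
    using infsum_add[OF assms(1)] by blast
  then show ?thesis by (simp add: infsum_uminus)
qed

lemma summable_on_diff_real:
  fixes f g :: "'a \<Rightarrow> real"
  assumes "f summable_on A" "g summable_on A"
  shows "(\<lambda>x. f x - g x) summable_on A"
proof -
  have "(\<lambda>x. - g x) summable_on A" using summable_on_cmult_left[OF assms(2), of "-1"] by simp
  then show ?thesis using summable_on_add[OF assms(1)] by fastforce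
qed

lemma summable_on_finsum:
  fixes f :: "'i \<Rightarrow> 'a \<Rightarrow> real"
  assumes "finite I" "\<And>i. i \<in> I \<Longrightarrow> f i summable_on A"
  shows "(\<lambda>x. \<Sum>i\<in>I. f i x) summable_on A \<and> infsum (\<lambda>x. \<Sum>i\<in>I. f i x) A = (\<Sum>i\<in>I. infsum (f i) A)"
  using assms
proof (induction I rule: finite_induct)
  case empty then show ?case by simp
next
  case (insert i I)
  then have IH: "(\<lambda>x. \<Sum>i\<in>I. f i x) summable_on A"
      "infsum (\<lambda>x. \<Sum>i\<in>I. f i x) A = (\<Sum>i\<in>I. infsum (f i) A)" by auto
  have fi: "f i summable_on A" using insert by auto
  have eq: "(\<lambda>x. \<Sum>i\<in>insert i I. f i x) = (\<lambda>x. f i x + (\<Sum>i\<in>I. f i x))"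
    using insert(1,2) by (simp add: sum.insert)
  have eq2: "(\<Sum>i\<in>insert i I. infsum (f i) A) = infsum (f i) A + (\<Sum>i\<in>I. infsum (f i) A)"
    using insert(1,2) by (simp add: sum.insert)
  show ?case unfolding eq eq2
  proof
    show "(\<lambda>x. f i x + (\<Sum>i\<in>I. f i x)) summable_on A" by (rule summable_on_add[OF fi IH(1)])
    show "(\<Sum>\<^sub>\<infinity>x\<in>A. f i x + (\<Sum>i\<in>I. f i x)) = infsum (f i) A + (\<Sum>i\<in>I. infsum (f i) A)"
      using infsum_add[OF fi IH(1)] IH(2) by linarith
  qed
qed

lemma poly_exp_bound:
  fixes \<epsilon> :: real
  assumes "0 < \<epsilon>"
  shows "\<exists>C>0. \<forall>x\<ge>0. x ^ p \<le> C * exp (\<epsilon> * x)"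
proof (intro exI conjI allI impI)
  show "0 < fact p / \<epsilon> ^ p" using assms by simp
  fix x :: real assume x: "0 \<le> x"
  obtain t where t: "exp (\<epsilon> * x) = (\<Sum>m<Suc p. (\<epsilon> * x) ^ m / fact m) + exp t / fact (Suc p) * (\<epsilon> * x) ^ Suc p"
    using Maclaurin_exp_le[of "\<epsilon> * x" "Suc p"] by blast
  have "(\<epsilon> * x) ^ p / fact p \<le> (\<Sum>m<Suc p. (\<epsilon> * x) ^ m / fact m)"
  proof (rule member_le_sum[where f = "\<lambda>m. (\<epsilon> * x) ^ m / fact m"])
    fix m assume "m \<in> {..<Suc p} - {p}"
    have "0 \<le> \<epsilon> * x" using assms x by simp
    then show "0 \<le> (\<epsilon> * x) ^ m / fact m" by simp
  qed auto
  moreover have "0 \<le> exp t / fact (Suc p) * (\<epsilon> * x) ^ Suc p"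
  proof -
    have "0 \<le> \<epsilon> * x" using assms x by simp
    then show ?thesis by simp
  qed
  ultimately have "(\<epsilon> * x) ^ p / fact p \<le> exp (\<epsilon> * x)" using t by linarith
  then have "(\<epsilon> * x) ^ p \<le> exp (\<epsilon> * x) * fact p"
    by (simp add: pos_divide_le_eq)
  then have "x ^ p * \<epsilon> ^ p \<le> fact p * exp (\<epsilon> * x)"
    by (simp add: power_mult_distrib mult.commute)
  then have "x ^ p \<le> fact p * exp (\<epsilon> * x) / \<epsilon> ^ p"
    using assms by (simp add: pos_le_divide_eq)
  then show "x ^ p \<le> fact p / \<epsilon> ^ p * exp (\<epsilon> * x)"
    by (simp add: divide_simps)
qed

lemma exp_taylor2_bound:
  fixes x :: real
  shows "\<bar>exp x - 1 - x\<bar> \<le> x^2 * exp \<bar>x\<bar>"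
proof -
  obtain t where t: "\<bar>t\<bar> \<le> \<bar>x\<bar>" "exp x = (\<Sum>m<2. x ^ m / fact m) + exp t / fact 2 * x ^ 2"
    using Maclaurin_exp_le[of x 2] by blast
  have h: "exp x - 1 - x = exp t / 2 * x^2" using t(2) by (simp add: numeral_2_eq_2)
  have "exp t \<le> exp \<bar>x\<bar>" using t(1) by simp
  have nn: "0 \<le> exp t / 2 * x^2" by simp
  have b: "exp t / 2 * x^2 \<le> x^2 * exp \<bar>x\<bar>"
  proof -
    have "exp t / 2 \<le> exp \<bar>x\<bar>" using \<open>exp t \<le> exp \<bar>x\<bar>\<close> exp_gt_zero[of t] by linarith
    then have "exp t / 2 * x^2 \<le> exp \<bar>x\<bar> * x^2" by (rule mult_right_mono) simp
    then show ?thesis by (simp only: mult.commute)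
  qed
  have "\<bar>exp t / 2 * x^2\<bar> = exp t / 2 * x^2" by (rule abs_of_nonneg[OF nn])
  then show ?thesis unfolding h using b by linarith
qed


lemma sum_dec:
  fixes k :: "'n::finite \<Rightarrow> nat"
  assumes "0 < k i"
  shows "sum (dec k i) UNIV = sum k UNIV - 1" "sum (dec k i) UNIV < sum k UNIV"
proof -
  have "sum k UNIV = k i + sum k (UNIV - {i})" by (simp add: sum.remove[of UNIV i])
  moreover have "sum (dec k i) UNIV = (k i - 1) + sum k (UNIV - {i})"
    by (simp add: sum.remove[of UNIV i] dec_def)
  ultimately show "sum (dec k i) UNIV = sum k UNIV - 1" "sum (dec k i) UNIV < sum k UNIV"
    using assms by auto
qed

function gf :: "('n::finite \<Rightarrow> ('n \<Rightarrow> nat) \<Rightarrow> real) \<Rightarrow> ('n \<Rightarrow> nat) \<Rightarrow> real" where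
  "gf g k = (if (\<forall>i. k i = 0) then 1
     else g (SOME i. 0 < k i) k * gf g (dec k (SOME i. 0 < k i)))"
  by auto
termination
proof (relation "Wellfounded.measure (\<lambda>(g,k). sum k UNIV)")
  fix g :: "'n::finite \<Rightarrow> ('n \<Rightarrow> nat) \<Rightarrow> real" and k :: "'n \<Rightarrow> nat"
  assume "\<not> (\<forall>i. k i = 0)"
  then have "0 < k (SOME i. 0 < k i)" by (metis (mono_tags) gr0I someI_ex)
  then show "((g, dec k (SOME i. 0 < k i)), g, k) \<in> Wellfounded.measure (\<lambda>(g, k). sum k UNIV)"
    using sum_dec by auto
qed auto

declare gf.simps[simp del]

lemma dec_comm: "dec (dec k i) j = dec (dec k j) i"
  by (auto simp: dec_def fun_eq_iff)

lemma dec_other: "i \<noteq> j \<Longrightarrow> dec k j i = k i"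
  by (simp add: dec_def)

lemma gf_step:
  fixes g :: "'n::finite \<Rightarrow> ('n \<Rightarrow> nat) \<Rightarrow> real"
  assumes zr: "zr_rates g" and inv: "INV g"
  shows "0 < k i \<Longrightarrow> gf g k = g i k * gf g (dec k i)"
proof (induction "sum k UNIV" arbitrary: k i rule: less_induct)
  case less
  define j where "j = (SOME i. 0 < k i)"
  have nz: "\<not> (\<forall>i. k i = 0)" using less.prems by auto
  then have kj: "0 < k j" unfolding j_def by (metis (mono_tags) gr0I someI_ex)
  have gk: "gf g k = g j k * gf g (dec k j)"
    unfolding j_def by (subst gf.simps[of g k]) (simp only: if_not_P[OF nz])
  show ?case
  proof (cases "i = j")
    case True then show ?thesis using gk by simp
  next
    case False
    have 1: "gf g (dec k j) = g i (dec k j) * gf g (dec (dec k j) i)"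
      using less.hyps[OF sum_dec(2)[of k j, OF kj]] less.prems False by (simp add: dec_other)
    have 2: "gf g (dec k i) = g j (dec k i) * gf g (dec (dec k i) j)"
      using less.hyps[OF sum_dec(2)[of k i, OF less.prems]] kj False by (simp add: dec_other)
    have pos1: "0 < g i (dec k j)" using zr less.prems False unfolding zr_rates_def
      by (simp add: dec_other)
    have pos2: "0 < g j (dec k i)" using zr kj False unfolding zr_rates_def
      by (simp add: dec_other)
    have "g i k / g i (dec k j) = g j k / g j (dec k i)"
      using inv False less.prems kj unfolding INV_def by blast
    then have "g i k * g j (dec k i) = g j k * g i (dec k j)"
      using pos1 pos2 by (simp add: field_simps)
    then show ?thesis using gk 1 2 dec_comm[of k i j]
      by (metis mult.assoc mult.commute)
  qed
qed

lemma gf_pos: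
  fixes g :: "'n::finite \<Rightarrow> ('n \<Rightarrow> nat) \<Rightarrow> real"
  assumes zr: "zr_rates g" and inv: "INV g"
  shows "0 < gf g k"
proof (induction "sum k UNIV" arbitrary: k rule: less_induct)
  case less
  show ?case
  proof (cases "\<forall>i. k i = 0")
    case True then show ?thesis by (simp add: gf.simps)
  next
    case False
    then obtain i where ki: "0 < k i" by auto
    have "0 < g i k" using zr ki unfolding zr_rates_def by blast
    then show ?thesis using gf_step[OF zr inv, of k i] ki less.hyps[OF sum_dec(2)[of k i, OF ki]] by simp
  qed
qed

lemma gfact_eq:
  fixes g :: "'n::finite \<Rightarrow> ('n \<Rightarrow> nat) \<Rightarrow> real"
  assumes zr: "zr_rates g" and inv: "INV g"
  shows "gfact g = gf g"
  unfolding gfact_def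
proof (rule the_equality)
  show "gf g (\<lambda>_. 0) = 1 \<and> (\<forall>k i. 0 < k i \<longrightarrow> gf g k = g i k * gf g (dec k i))"
    using gf_step[OF zr inv] by (simp add: gf.simps)
next
  fix F assume F: "F (\<lambda>_. 0) = 1 \<and> (\<forall>k i. 0 < k i \<longrightarrow> F k = g i k * F (dec k i))"
  have "F k = gf g k" for k
  proof (induction "sum k UNIV" arbitrary: k rule: less_induct)
    case less
    show ?case
    proof (cases "\<forall>i. k i = 0")
      case True
      then have "k = (\<lambda>_. 0)" by auto
      then show ?thesis using F by (simp add: gf.simps)
    next
      case False
      then obtain i where ki: "0 < k i" by auto
      then show ?thesis using F gf_step[OF zr inv, of k i] ki less.hyps[OF sum_dec(2)[of k i, OF ki]] by simp
    qed
  qed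
  then show "F = gf g" by auto
qed


definition kv :: "('n::finite \<Rightarrow> nat) \<Rightarrow> real^'n \<Rightarrow> real" where
  "kv k h = (\<Sum>i\<in>UNIV. real (k i) * h $ i)"
definition sz :: "('n::finite \<Rightarrow> nat) \<Rightarrow> real" where
  "sz k = (\<Sum>i\<in>UNIV. real (k i))"
definition one :: "real^'n::finite" where "one = (\<chi> i. 1)"

lemma kv_add: "kv k (a + b) = kv k a + kv k b"
  by (simp add: kv_def algebra_simps sum.distrib)
lemma kv_diff: "kv k (a - b) = kv k a - kv k b"
  by (simp add: kv_def algebra_simps sum_subtractf)
lemma kv_scale: "kv k (c *\<^sub>R a) = c * kv k a"
  by (simp add: kv_def algebra_simps sum_distrib_left)
lemma kv_one: "kv k one = sz k"
  by (simp add: kv_def sz_def one_def)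
lemma sz_nonneg: "0 \<le> sz k"
  by (simp add: sz_def sum_nonneg)
lemma one_sz_nonneg: "0 \<le> 1 + sz k"
  using sz_nonneg[of k] by simp
lemma k_le_sz: "real (k i) \<le> sz k"
  unfolding sz_def by (rule member_le_sum) auto
lemma kv_bound: "\<bar>kv k h\<bar> \<le> sz k * norm h"
proof -
  have "\<bar>kv k h\<bar> \<le> (\<Sum>i\<in>UNIV. \<bar>real (k i) * h $ i\<bar>)" unfolding kv_def by (rule sum_abs)
  also have "\<dots> \<le> (\<Sum>i\<in>UNIV. real (k i) * norm h)"
    by (rule sum_mono) (simp add: abs_mult component_le_norm_cart mult_left_mono)
  also have "\<dots> = sz k * norm h" by (simp add: sz_def sum_distrib_right)
  finally show ?thesis .
qed
lemma kv_mono: "(\<And>i. a $ i \<le> b $ i) \<Longrightarrow> kv k a \<le> kv k b"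
  unfolding kv_def by (rule sum_mono) (simp add: mult_left_mono)
lemma kv_zero_k: "kv (\<lambda>_. 0) h = 0"
  by (simp add: kv_def)

definition unit :: "'n \<Rightarrow> ('n \<Rightarrow> nat)" where "unit i = (\<lambda>j. if j = i then 1 else 0)"

lemma kv_unit: "kv (unit i) h = h $ i"
proof -
  have eq: "(\<lambda>j. real (unit i j) * h $ j) = (\<lambda>j. if j = i then h $ i else 0)"
    by (auto simp: unit_def)
  have "kv (unit i) h = sum (\<lambda>j. real (unit i j) * h $ j) UNIV" by (simp add: kv_def)
  also have "\<dots> = sum (\<lambda>j. if j = i then h $ i else 0) UNIV" by (simp only: eq)
  also have "\<dots> = h $ i" by simp
  finally show ?thesis .
qed

locale zrp =
  fixes g :: "'n::finite \<Rightarrow> ('n \<Rightarrow> nat) \<Rightarrow> real"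
  assumes zr: "zr_rates g" and inv: "INV g"
begin

lemma gfact_pos: "0 < gfact g k"
  using gf_pos[OF zr inv] gfact_eq[OF zr inv] by simp

lemma gfact_zero: "gfact g (\<lambda>_. 0) = 1"
  using gfact_eq[OF zr inv] by (simp add: gf.simps)

lemma gfact_step: "0 < k i \<Longrightarrow> gfact g k = g i k * gfact g (dec k i)"
  using gf_step[OF zr inv] gfact_eq[OF zr inv] by simp

definition ew :: "real^'n \<Rightarrow> ('n \<Rightarrow> nat) \<Rightarrow> real" where
  "ew \<theta> k = exp (kv k \<theta>) / gfact g k"

lemma ew_pos: "0 < ew \<theta> k"
  by (simp add: ew_def gfact_pos)

lemma ew_nonneg: "0 \<le> ew \<theta> k"
  using ew_pos less_imp_le by blast

lemma ew_zero: "ew \<theta> (\<lambda>_. 0) = 1"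
  by (simp add: ew_def gfact_zero kv_zero_k)

lemma ew_add: "ew (\<theta> + h) k = ew \<theta> k * exp (kv k h)"
  by (simp add: ew_def kv_add exp_add)

lemma ew_mono: "(\<And>i. a $ i \<le> b $ i) \<Longrightarrow> ew a k \<le> ew b k"
  unfolding ew_def using gfact_pos[of k] kv_mono[of a b k]
  by (simp add: divide_right_mono)

lemma wt_Ev: "wt g (\<chi> i. exp (\<theta> $ i)) k = ew \<theta> k"
proof -
  have "(\<Prod>i\<in>UNIV. exp (\<theta> $ i) ^ k i) = (\<Prod>i\<in>UNIV. exp (real (k i) * \<theta> $ i))"
    by (rule prod.cong) (simp_all add: exp_of_nat_mult)
  also have "\<dots> = exp (kv k \<theta>)" by (simp add: kv_def exp_sum)
  finally show ?thesis by (simp add: wt_def ew_def)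
qed

lemma moment_summable:
  assumes eps: "0 < \<epsilon>" and S: "ew (\<theta> + \<epsilon> *\<^sub>R one) summable_on UNIV"
  shows "(\<lambda>k. (1 + sz k) ^ p * exp (\<epsilon> / 2 * sz k) * ew \<theta> k) summable_on UNIV"
proof -
  obtain C where C: "C > 0" "\<And>y. y \<ge> 0 \<Longrightarrow> y ^ p \<le> C * exp (\<epsilon> / 2 * y)"
    using poly_exp_bound[of "\<epsilon> / 2" p] eps by auto
  have b: "(1 + sz k) ^ p * exp (\<epsilon> / 2 * sz k) * ew \<theta> k \<le> (C * exp (\<epsilon> / 2)) * ew (\<theta> + \<epsilon> *\<^sub>R one) k" for k
  proof -
    have "(1 + sz k) ^ p \<le> C * exp (\<epsilon> / 2 * (1 + sz k))" using C(2)[of "1 + sz k"] sz_nonneg[of k] by simp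
    then have "(1 + sz k) ^ p * exp (\<epsilon> / 2 * sz k) \<le> C * exp (\<epsilon> / 2 * (1 + sz k)) * exp (\<epsilon> / 2 * sz k)"
      by (rule mult_right_mono) simp
    also have "\<dots> = (C * exp (\<epsilon> / 2)) * exp (\<epsilon> * sz k)"
    proof -
      have e: "\<epsilon> / 2 * (1 + sz k) + \<epsilon> / 2 * sz k = \<epsilon> / 2 + \<epsilon> * sz k" by (simp add: field_simps)
      have "exp (\<epsilon> / 2 * (1 + sz k)) * exp (\<epsilon> / 2 * sz k) = exp (\<epsilon> / 2) * exp (\<epsilon> * sz k)"
        by (simp only: e flip: exp_add)
      then show ?thesis by (simp add: mult.assoc)
    qed
    finally have "(1 + sz k) ^ p * exp (\<epsilon> / 2 * sz k) * ew \<theta> k \<le> (C * exp (\<epsilon> / 2)) * exp (\<epsilon> * sz k) * ew \<theta> k"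
      by (rule mult_right_mono) (rule ew_nonneg)
    also have "\<dots> = (C * exp (\<epsilon> / 2)) * ew (\<theta> + \<epsilon> *\<^sub>R one) k"
      by (simp add: ew_add kv_scale kv_one)
    finally show ?thesis .
  qed
  show ?thesis
    by (rule summable_on_comparison_test[OF summable_on_cmult_right[OF S, of "C * exp (\<epsilon> / 2)"]])
       (use b ew_nonneg one_sz_nonneg in \<open>auto intro!: mult_nonneg_nonneg zero_le_power\<close>)
qed

lemma poly_summable:
  assumes eps: "0 < \<epsilon>" and S: "ew (\<theta> + \<epsilon> *\<^sub>R one) summable_on UNIV"
    and f: "\<And>k. \<bar>f k\<bar> \<le> B * (1 + sz k) ^ p * ew \<theta> k"
  shows "f summable_on UNIV"
proof (rule real_summable_dom)
  show "(\<lambda>k. \<bar>B\<bar> * ((1 + sz k) ^ p * exp (\<epsilon> / 2 * sz k) * ew \<theta> k)) summable_on UNIV"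
    by (rule summable_on_cmult_right[OF moment_summable[OF eps S]])
  fix k
  have "B * (1 + sz k) ^ p * ew \<theta> k \<le> \<bar>B\<bar> * ((1 + sz k) ^ p * ew \<theta> k)"
    using sz_nonneg[of k] ew_nonneg[of \<theta> k] by (simp add: mult.assoc mult_right_mono)
  also have "\<dots> \<le> \<bar>B\<bar> * ((1 + sz k) ^ p * exp (\<epsilon> / 2 * sz k) * ew \<theta> k)"
  proof -
    have "1 \<le> exp (\<epsilon> / 2 * sz k)" using sz_nonneg[of k] eps by simp
    then have "(1 + sz k) ^ p * ew \<theta> k * 1 \<le> (1 + sz k) ^ p * ew \<theta> k * exp (\<epsilon> / 2 * sz k)"
      using sz_nonneg[of k] ew_nonneg[of \<theta> k] by (intro mult_left_mono) auto
    then show ?thesis by (intro mult_left_mono) (auto simp: ac_simps)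
  qed
  finally show "\<bar>f k\<bar> \<le> \<bar>B\<bar> * ((1 + sz k) ^ p * exp (\<epsilon> / 2 * sz k) * ew \<theta> k)"
    using f[of k] by linarith
qed

end

context zrp begin

lemma series_deriv:
  assumes eps: "0 < \<epsilon>" and S: "ew (\<theta> + \<epsilon> *\<^sub>R one) summable_on UNIV"
    and q0: "\<And>k. 0 \<le> q k" and q1: "\<And>k. q k \<le> (1 + sz k) ^ p"
  shows "((\<lambda>x. infsum (\<lambda>k. q k * ew x k) UNIV) has_derivative
          (\<lambda>h. \<Sum>j\<in>UNIV. h $ j * infsum (\<lambda>k. q k * real (k j) * ew \<theta> k) UNIV)) (at \<theta>)"
proof -
  define F where "F x = infsum (\<lambda>k. q k * ew x k) UNIV" for x
  define c where "c j = infsum (\<lambda>k. q k * real (k j) * ew \<theta> k) UNIV" for j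
  define L where "L h = (\<Sum>j\<in>UNIV. h $ j * c j)" for h
  define W where "W k = (1 + sz k) ^ (p+2) * exp (\<epsilon>/2 * sz k) * ew \<theta> k" for k
  define B where "B = infsum W UNIV"
  have Wsum: "W summable_on UNIV" unfolding W_def by (rule moment_summable[OF eps S])
  have Wnn: "0 \<le> W k" for k
    unfolding W_def using one_sz_nonneg[of k] ew_nonneg[of \<theta> k] by simp
  have B0: "0 \<le> B" unfolding B_def using Wnn by (simp add: infsum_nonneg)
  have qsz: "q k * real (k j) \<le> (1 + sz k) ^ (p+1)" for k j
  proof -
    have "q k * real (k j) \<le> (1 + sz k) ^ p * (1 + sz k)"
      using q0[of k] q1[of k] k_le_sz[of k j] one_sz_nonneg[of k]
      by (intro mult_mono) auto
    then show ?thesis by (simp add: mult.commute)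
  qed
  have cj_sum: "(\<lambda>k. q k * real (k j) * ew \<theta> k) summable_on UNIV" for j
  proof (rule poly_summable[OF eps S, where B = 1 and p = "p+1"])
    fix k
    have "0 \<le> q k * real (k j) * ew \<theta> k" using q0[of k] ew_nonneg[of \<theta> k] by simp
    moreover have "q k * real (k j) * ew \<theta> k \<le> (1 + sz k) ^ (p+1) * ew \<theta> k"
      using qsz[of k j] ew_nonneg[of \<theta> k] by (rule mult_right_mono)
    ultimately show "\<bar>q k * real (k j) * ew \<theta> k\<bar> \<le> 1 * (1 + sz k) ^ (p + 1) * ew \<theta> k" by simp
  qed
  have q_sum: "(\<lambda>k. q k * ew \<theta> k) summable_on UNIV"
  proof (rule poly_summable[OF eps S, where B = 1 and p = p])
    fix k
    show "\<bar>q k * ew \<theta> k\<bar> \<le> 1 * (1 + sz k) ^ p * ew \<theta> k"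
      using q0[of k] q1[of k] ew_nonneg[of \<theta> k] by (simp add: mult_right_mono)
  qed
  have Lsum: "L h = infsum (\<lambda>k. q k * kv k h * ew \<theta> k) UNIV" for h
  proof -
    have eq: "q k * kv k h * ew \<theta> k = (\<Sum>j\<in>UNIV. h $ j * (q k * real (k j) * ew \<theta> k))" for k
      by (simp add: kv_def sum_distrib_left sum_distrib_right algebra_simps)
    have "infsum (\<lambda>k. \<Sum>j\<in>UNIV. h $ j * (q k * real (k j) * ew \<theta> k)) UNIV
        = (\<Sum>j\<in>UNIV. infsum (\<lambda>k. h $ j * (q k * real (k j) * ew \<theta> k)) UNIV)"
      using summable_on_finsum[of UNIV "\<lambda>j k. h $ j * (q k * real (k j) * ew \<theta> k)" UNIV]
        summable_on_cmult_right[OF cj_sum] by auto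
    also have "\<dots> = L h" unfolding L_def c_def by (simp add: infsum_cmult_right')
    finally show ?thesis using eq by simp
  qed
  have key: "\<bar>F (\<theta> + h) - F \<theta> - L h\<bar> \<le> B * (norm h)^2" if hn: "norm h \<le> \<epsilon>/2" for h
  proof -
    define R where "R k = q k * ew \<theta> k * (exp (kv k h) - 1 - kv k h)" for k
    have ex: "exp (\<bar>kv k h\<bar>) \<le> exp (\<epsilon>/2 * sz k)" for k
    proof -
      have "\<bar>kv k h\<bar> \<le> sz k * norm h" by (rule kv_bound)
      also have "\<dots> \<le> sz k * (\<epsilon>/2)" using hn sz_nonneg[of k] by (rule mult_left_mono)
      finally show ?thesis by (simp add: mult.commute)
    qed
    have sh: "(\<lambda>k. q k * ew (\<theta> + h) k) summable_on UNIV"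
    proof (rule real_summable_dom[OF moment_summable[OF eps S, of p]])
      fix k
      have "q k * ew (\<theta> + h) k = q k * ew \<theta> k * exp (kv k h)" by (simp add: ew_add)
      also have "\<dots> \<le> (1 + sz k) ^ p * ew \<theta> k * exp (\<epsilon> / 2 * sz k)"
      proof (rule mult_mono)
        show "exp (kv k h) \<le> exp (\<epsilon> / 2 * sz k)" using ex[of k] by simp
        show "q k * ew \<theta> k \<le> (1 + sz k) ^ p * ew \<theta> k"
          using q1[of k] ew_nonneg[of \<theta> k] by (rule mult_right_mono)
      qed (use q0 ew_nonneg one_sz_nonneg in \<open>auto intro!: mult_nonneg_nonneg zero_le_power\<close>)
      finally show "\<bar>q k * ew (\<theta> + h) k\<bar> \<le> (1 + sz k) ^ p * exp (\<epsilon> / 2 * sz k) * ew \<theta> k"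
        using q0[of k] ew_nonneg[of "\<theta> + h" k] by (simp add: ac_simps)
    qed
    have kvsum: "(\<lambda>k. q k * kv k h * ew \<theta> k) summable_on UNIV"
    proof -
      have "(\<lambda>k. \<Sum>j\<in>UNIV. h $ j * (q k * real (k j) * ew \<theta> k)) summable_on UNIV"
        using summable_on_finsum[of UNIV "\<lambda>j k. h $ j * (q k * real (k j) * ew \<theta> k)" UNIV]
          summable_on_cmult_right[OF cj_sum] by auto
      moreover have "(\<lambda>k. \<Sum>j\<in>UNIV. h $ j * (q k * real (k j) * ew \<theta> k)) = (\<lambda>k. q k * kv k h * ew \<theta> k)"
        by (simp add: kv_def sum_distrib_left sum_distrib_right algebra_simps)
      ultimately show ?thesis by simp
    qed
    have Req: "F (\<theta> + h) - F \<theta> - L h = infsum R UNIV"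
    proof -
      have "F (\<theta> + h) - F \<theta> - L h = infsum (\<lambda>k. q k * ew (\<theta> + h) k - q k * ew \<theta> k) UNIV - infsum (\<lambda>k. q k * kv k h * ew \<theta> k) UNIV"
        unfolding F_def Lsum using infsum_diff_real[OF sh q_sum] by simp
      also have "\<dots> = infsum (\<lambda>k. (q k * ew (\<theta> + h) k - q k * ew \<theta> k) - q k * kv k h * ew \<theta> k) UNIV"
        using infsum_diff_real[OF summable_on_diff_real[OF sh q_sum] kvsum] by simp
      also have "\<dots> = infsum R UNIV"
        by (rule infsum_cong) (simp add: R_def ew_add algebra_simps)
      finally show ?thesis .
    qed
    have Rb: "\<bar>R k\<bar> \<le> (norm h)^2 * W k" for k
    proof -
      have a: "\<bar>exp (kv k h) - 1 - kv k h\<bar> \<le> (kv k h)^2 * exp \<bar>kv k h\<bar>" by (rule exp_taylor2_bound)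
      have b: "(kv k h)^2 \<le> (1 + sz k)^2 * (norm h)^2"
      proof -
        have "\<bar>kv k h\<bar> \<le> (1 + sz k) * norm h"
        proof -
          have "sz k * norm h \<le> (1 + sz k) * norm h" by (rule mult_right_mono) simp_all
          then show ?thesis using kv_bound[of k h] by linarith
        qed
        then have "\<bar>kv k h\<bar>^2 \<le> ((1 + sz k) * norm h)^2" by (rule power_mono) simp
        then show ?thesis by (simp add: power_mult_distrib)
      qed
      have c: "\<bar>exp (kv k h) - 1 - kv k h\<bar> \<le> (1 + sz k)^2 * (norm h)^2 * exp (\<epsilon>/2 * sz k)"
        using a b ex[of k] by (smt (verit) exp_ge_zero mult_mono zero_le_power2)
      have "\<bar>R k\<bar> = q k * ew \<theta> k * \<bar>exp (kv k h) - 1 - kv k h\<bar>"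
        unfolding R_def using q0[of k] ew_nonneg[of \<theta> k] by (simp add: abs_mult)
      also have "\<dots> \<le> ((1 + sz k) ^ p * ew \<theta> k) * ((1 + sz k)^2 * (norm h)^2 * exp (\<epsilon>/2 * sz k))"
        using c q0[of k] q1[of k] ew_nonneg[of \<theta> k]
        by (intro mult_mono) (auto intro: mult_right_mono)
      also have "\<dots> = (norm h)^2 * W k" unfolding W_def by (simp add: mult_ac power_add power2_eq_square)
      finally show ?thesis .
    qed
    have Wh: "(\<lambda>k. (norm h)^2 * W k) summable_on UNIV" by (rule summable_on_cmult_right[OF Wsum])
    have Rsum: "R summable_on UNIV" by (rule real_summable_dom[OF Wh Rb])
    have Rlow: "- ((norm h)^2 * W k) \<le> R k" for k using Rb[of k] by linarith
    have Rup: "R k \<le> (norm h)^2 * W k" for k using Rb[of k] by linarith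
    have "infsum R UNIV \<le> infsum (\<lambda>k. (norm h)^2 * W k) UNIV"
      by (rule infsum_mono[OF Rsum Wh]) (rule Rup)
    moreover have "- infsum (\<lambda>k. (norm h)^2 * W k) UNIV \<le> infsum R UNIV"
    proof -
      have "infsum (\<lambda>k. - ((norm h)^2 * W k)) UNIV \<le> infsum R UNIV"
        by (rule infsum_mono[OF summable_on_cmult_right[OF Wh, of "-1", simplified] Rsum])
           (rule Rlow)
      then show ?thesis by (simp add: infsum_uminus)
    qed
    moreover have "infsum (\<lambda>k. (norm h)^2 * W k) UNIV = (norm h)^2 * B"
      unfolding B_def by (simp add: infsum_cmult_right')
    ultimately show ?thesis unfolding Req by (simp add: abs_le_iff mult.commute)
  qed
  have bl: "bounded_linear L"
  proof -
    have "linear L" unfolding L_def by (rule linearI) (simp_all add: algebra_simps sum.distrib sum_distrib_left)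
    then show ?thesis by (simp add: linear_conv_bounded_linear)
  qed
  have "(F has_derivative L) (at \<theta>)"
    unfolding has_derivative_at_alt
  proof (intro conjI allI impI bl)
    fix e :: real assume e: "0 < e"
    show "\<exists>d>0. \<forall>y. norm (y - \<theta>) < d \<longrightarrow> norm (F y - F \<theta> - L (y - \<theta>)) \<le> e * norm (y - \<theta>)"
    proof (intro exI conjI allI impI)
      show "0 < min (\<epsilon>/2) (e / (B + 1))" using eps e B0 by simp
      fix y assume y: "norm (y - \<theta>) < min (\<epsilon>/2) (e / (B + 1))"
      define h where "h = y - \<theta>"
      have h1: "norm h \<le> \<epsilon>/2" using y h_def by simp
      have "norm h < e / (B + 1)" using y h_def by simp
      then have h2: "norm h * (B + 1) \<le> e" using B0 by (simp add: pos_less_divide_eq less_imp_le)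
      have "\<bar>F y - F \<theta> - L h\<bar> \<le> B * (norm h)^2" using key[OF h1] h_def by simp
      also have "\<dots> \<le> e * norm h"
      proof -
        have "B * norm h \<le> norm h * (B + 1)" by (simp add: algebra_simps)
        then have "B * norm h \<le> e" using h2 by linarith
        then have "B * norm h * norm h \<le> e * norm h" by (rule mult_right_mono) simp
        then show ?thesis by (simp add: power2_eq_square mult.assoc)
      qed
      finally show "norm (F y - F \<theta> - L (y - \<theta>)) \<le> e * norm (y - \<theta>)" using h_def by simp
    qed
  qed
  then show ?thesis unfolding F_def L_def c_def .
qed

end

lemma exp_gt_1_plus: "x \<noteq> 0 \<Longrightarrow> 1 + x < exp (x::real)"
proof -
  assume x: "x \<noteq> 0"
  obtain t where t: "exp x = (\<Sum>m<2. x ^ m / fact m) + exp t / fact 2 * x ^ 2"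
    using Maclaurin_exp_lt[of x 2] x by auto
  have "exp x = 1 + x + exp t / 2 * x^2" using t by (simp add: numeral_2_eq_2)
  moreover have "0 < exp t / 2 * x^2" using x by simp
  ultimately show ?thesis by linarith
qed

lemma k_le_1sz: "real (k i) \<le> 1 + sz k"
  using k_le_sz[of k i] by simp

context zrp begin

definition Zf :: "real^'n \<Rightarrow> real" where "Zf \<theta> = infsum (ew \<theta>) UNIV"
definition Nf :: "'n \<Rightarrow> real^'n \<Rightarrow> real" where
  "Nf i \<theta> = infsum (\<lambda>k. real (k i) * ew \<theta> k) UNIV"
definition Mf :: "'n \<Rightarrow> 'n \<Rightarrow> real^'n \<Rightarrow> real" where
  "Mf i j \<theta> = infsum (\<lambda>k. real (k i) * real (k j) * ew \<theta> k) UNIV"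
definition Sop :: "(real^'n) set" where
  "Sop = {\<theta>. \<exists>\<epsilon>>0. ew (\<theta> + \<epsilon> *\<^sub>R one) summable_on UNIV}"
definition good :: "real^'n \<Rightarrow> bool" where
  "good \<theta> \<longleftrightarrow> ew \<theta> summable_on UNIV \<and> (\<forall>i. (\<lambda>k. real (k i) * ew \<theta> k) summable_on UNIV)"
definition mn :: "real^'n \<Rightarrow> 'n \<Rightarrow> real" where "mn \<theta> i = Nf i \<theta> / Zf \<theta>"

lemma Zf_ge1: "ew \<theta> summable_on UNIV \<Longrightarrow> 1 \<le> Zf \<theta>"
  unfolding Zf_def using infsum_ge_term[of "ew \<theta>" "\<lambda>_. 0"] ew_nonneg ew_zero by simp

lemma Zf_pos: "ew \<theta> summable_on UNIV \<Longrightarrow> 0 < Zf \<theta>"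
  using Zf_ge1 by fastforce

lemma Sop_good: "\<theta> \<in> Sop \<Longrightarrow> good \<theta>"
proof -
  assume "\<theta> \<in> Sop"
  then obtain \<epsilon> where eps: "0 < \<epsilon>" and S: "ew (\<theta> + \<epsilon> *\<^sub>R one) summable_on UNIV"
    unfolding Sop_def by auto
  have "ew \<theta> summable_on UNIV"
    by (rule poly_summable[OF eps S, where B = 1 and p = 0]) (simp add: ew_nonneg)
  moreover have "(\<lambda>k. real (k i) * ew \<theta> k) summable_on UNIV" for i
    by (rule poly_summable[OF eps S, where B = 1 and p = 1])
       (use k_le_1sz[of _ i] ew_nonneg in \<open>auto intro!: mult_right_mono\<close>)
  ultimately show ?thesis unfolding good_def by auto
qed

lemma open_Sop: "open Sop"
  unfolding open_dist
proof (intro ballI)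
  fix \<theta> assume "\<theta> \<in> Sop"
  then obtain \<epsilon> where eps: "0 < \<epsilon>" and S: "ew (\<theta> + \<epsilon> *\<^sub>R one) summable_on UNIV"
    unfolding Sop_def by auto
  show "\<exists>e>0. \<forall>y. dist y \<theta> < e \<longrightarrow> y \<in> Sop"
  proof (intro exI conjI allI impI)
    show "0 < \<epsilon> / 2" using eps by simp
    fix y assume y: "dist y \<theta> < \<epsilon> / 2"
    have le: "(y + (\<epsilon>/2) *\<^sub>R one) $ i \<le> (\<theta> + \<epsilon> *\<^sub>R one) $ i" for i
    proof -
      have "\<bar>(y - \<theta>) $ i\<bar> \<le> norm (y - \<theta>)" by (rule component_le_norm_cart)
      then have "y $ i - \<theta> $ i \<le> \<epsilon> / 2" using y by (simp add: dist_norm)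
      then show ?thesis by (simp add: one_def)
    qed
    have "ew (y + (\<epsilon>/2) *\<^sub>R one) summable_on UNIV"
      by (rule summable_on_comparison_test[OF S]) (use ew_mono[OF le] ew_nonneg in auto)
    then show "y \<in> Sop" unfolding Sop_def using eps by (intro CollectI exI[of _ "\<epsilon>/2"]) auto
  qed
qed

lemma Zf_deriv:
  assumes "\<theta> \<in> Sop"
  shows "(Zf has_derivative (\<lambda>h. \<Sum>j\<in>UNIV. h $ j * Nf j \<theta>)) (at \<theta>)"
proof -
  obtain \<epsilon> where eps: "0 < \<epsilon>" and S: "ew (\<theta> + \<epsilon> *\<^sub>R one) summable_on UNIV"
    using assms unfolding Sop_def by auto
  have "((\<lambda>x. infsum (\<lambda>k. 1 * ew x k) UNIV) has_derivative
          (\<lambda>h. \<Sum>j\<in>UNIV. h $ j * infsum (\<lambda>k. 1 * real (k j) * ew \<theta> k) UNIV)) (at \<theta>)"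
    by (rule series_deriv[OF eps S, where p = 0]) auto
  then show ?thesis unfolding Zf_def Nf_def by (simp add: fun_eq_iff)
qed

lemma Nf_deriv:
  assumes "\<theta> \<in> Sop"
  shows "(Nf i has_derivative (\<lambda>h. \<Sum>j\<in>UNIV. h $ j * Mf i j \<theta>)) (at \<theta>)"
proof -
  obtain \<epsilon> where eps: "0 < \<epsilon>" and S: "ew (\<theta> + \<epsilon> *\<^sub>R one) summable_on UNIV"
    using assms unfolding Sop_def by auto
  have "((\<lambda>x. infsum (\<lambda>k. real (k i) * ew x k) UNIV) has_derivative
          (\<lambda>h. \<Sum>j\<in>UNIV. h $ j * infsum (\<lambda>k. real (k i) * real (k j) * ew \<theta> k) UNIV)) (at \<theta>)"
    by (rule series_deriv[OF eps S, where p = 1]) (use k_le_1sz in auto)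
  then show ?thesis unfolding Nf_def Mf_def by (simp add: fun_eq_iff)
qed

definition Gm :: "real^'n \<Rightarrow> 'n \<Rightarrow> 'n \<Rightarrow> real" where
  "Gm \<theta> i j = Mf i j \<theta> / Zf \<theta> - mn \<theta> i * mn \<theta> j"

definition tau :: "real^'n \<Rightarrow> real^'n" where "tau \<theta> = (\<chi> i. mn \<theta> i)"

lemma mn_deriv:
  assumes "\<theta> \<in> Sop"
  shows "((\<lambda>x. mn x i) has_derivative (\<lambda>h. \<Sum>j\<in>UNIV. Gm \<theta> i j * h $ j)) (at \<theta>)"
proof -
  have Zp: "Zf \<theta> \<noteq> 0" using Zf_pos Sop_good[OF assms] unfolding good_def by fastforce
  have "((\<lambda>x. Nf i x / Zf x) has_derivative
     (\<lambda>h. ((\<Sum>j\<in>UNIV. h $ j * Mf i j \<theta>) * Zf \<theta> - Nf i \<theta> * (\<Sum>j\<in>UNIV. h $ j * Nf j \<theta>)) / (Zf \<theta> * Zf \<theta>))) (at \<theta>)"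
    by (rule has_derivative_divide'[OF Nf_deriv[OF assms] Zf_deriv[OF assms] Zp])
  moreover have "((\<Sum>j\<in>UNIV. h $ j * Mf i j \<theta>) * Zf \<theta> - Nf i \<theta> * (\<Sum>j\<in>UNIV. h $ j * Nf j \<theta>)) / (Zf \<theta> * Zf \<theta>)
      = (\<Sum>j\<in>UNIV. Gm \<theta> i j * h $ j)" for h
    using Zp unfolding Gm_def mn_def
    by (simp add: field_simps sum_distrib_left sum_distrib_right sum_divide_distrib
        sum_subtractf[symmetric])
  ultimately show ?thesis unfolding mn_def by simp
qed

lemma vec_sum_axis: "(\<chi> i. f i) = (\<Sum>i\<in>UNIV. f i *\<^sub>R axis i (1::real))"
  by (simp add: vec_eq_iff sum_component axis_def cart_eq_inner_axis[symmetric]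
      if_distrib cong: if_cong)

lemma tau_deriv:
  assumes "\<theta> \<in> Sop"
  shows "(tau has_derivative (\<lambda>h. \<chi> i. \<Sum>j\<in>UNIV. Gm \<theta> i j * h $ j)) (at \<theta>)"
proof -
  have "((\<lambda>x. \<Sum>i\<in>UNIV. mn x i *\<^sub>R axis i (1::real)) has_derivative
      (\<lambda>h. \<Sum>i\<in>UNIV. (\<Sum>j\<in>UNIV. Gm \<theta> i j * h $ j) *\<^sub>R axis i 1)) (at \<theta>)"
    by (intro has_derivative_sum has_derivative_scaleR_left mn_deriv[OF assms])
  then show ?thesis unfolding tau_def by (simp only: vec_sum_axis[symmetric])
qed

lemma tau_cont: "continuous_on Sop tau"
  by (rule continuous_at_imp_continuous_on)
     (use tau_deriv has_derivative_continuous in blast)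

end

context zrp begin

lemma kv_moment:
  assumes "good \<theta>"
  shows "(\<lambda>k. kv k v * ew \<theta> k) summable_on UNIV \<and>
         infsum (\<lambda>k. kv k v * ew \<theta> k) UNIV = (\<Sum>i\<in>UNIV. v $ i * Nf i \<theta>)"
proof -
  have s: "(\<lambda>k. v $ i * (real (k i) * ew \<theta> k)) summable_on UNIV" for i
    using assms unfolding good_def by (intro summable_on_cmult_right) auto
  have eq: "(\<lambda>k. kv k v * ew \<theta> k) = (\<lambda>k. \<Sum>i\<in>UNIV. v $ i * (real (k i) * ew \<theta> k))"
    by (simp add: kv_def fun_eq_iff sum_distrib_left sum_distrib_right mult_ac)
  show ?thesis unfolding eq
    using summable_on_finsum[of UNIV "\<lambda>i k. v $ i * (real (k i) * ew \<theta> k)" UNIV] s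
    by (simp add: infsum_cmult_right' Nf_def)
qed

lemma jensen_strict:
  assumes g2: "good \<theta>2" and s1: "ew \<theta>1 summable_on UNIV" and ne: "\<theta>1 \<noteq> \<theta>2"
  shows "Zf \<theta>2 * exp (\<Sum>i\<in>UNIV. (\<theta>1 - \<theta>2) $ i * mn \<theta>2 i) < Zf \<theta>1"
proof -
  define v where "v = \<theta>1 - \<theta>2"
  define \<mu> where "\<mu> = (\<Sum>i\<in>UNIV. v $ i * mn \<theta>2 i)"
  have s2: "ew \<theta>2 summable_on UNIV" using g2 unfolding good_def by auto
  have Z2: "0 < Zf \<theta>2" by (rule Zf_pos[OF s2])
  have kvs: "(\<lambda>k. kv k v * ew \<theta>2 k) summable_on UNIV" "infsum (\<lambda>k. kv k v * ew \<theta>2 k) UNIV = \<mu> * Zf \<theta>2"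
    using kv_moment[OF g2, of v] Z2 unfolding \<mu>_def mn_def
    by (auto simp: sum_distrib_right)
  have e1: "ew \<theta>1 k = ew \<theta>2 k * exp (kv k v)" for k
    using ew_add[of \<theta>2 v k] unfolding v_def by simp
  define T where "T k = ew \<theta>1 k - exp \<mu> * ((1 - \<mu>) * ew \<theta>2 k + kv k v * ew \<theta>2 k)" for k
  have Teq: "T k = ew \<theta>2 k * (exp (kv k v) - exp \<mu> * (1 + kv k v - \<mu>))" for k
    unfolding T_def e1 by (simp add: algebra_simps)
  have Tnn: "0 \<le> T k" for k
  proof -
    have "1 + (kv k v - \<mu>) \<le> exp (kv k v - \<mu>)" by (rule exp_ge_add_one_self)
    then have "exp \<mu> * (1 + (kv k v - \<mu>)) \<le> exp \<mu> * exp (kv k v - \<mu>)" by simp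
    also have "\<dots> = exp (kv k v)" by (simp flip: exp_add)
    finally have "exp \<mu> * (1 + kv k v - \<mu>) \<le> exp (kv k v)" by (simp add: add_diff_eq)
    then show ?thesis unfolding Teq using ew_nonneg[of \<theta>2 k] by (intro mult_nonneg_nonneg) auto
  qed
  have sA: "(\<lambda>k. (1 - \<mu>) * ew \<theta>2 k + kv k v * ew \<theta>2 k) summable_on UNIV"
    by (intro summable_on_add summable_on_cmult_right s2 kvs(1))
  have Tsum: "T summable_on UNIV" unfolding T_def
    by (intro summable_on_diff_real s1 summable_on_cmult_right sA)
  have "infsum T UNIV = Zf \<theta>1 - exp \<mu> * ((1 - \<mu>) * Zf \<theta>2 + \<mu> * Zf \<theta>2)"
  proof -
    have "infsum T UNIV = Zf \<theta>1 - infsum (\<lambda>k. exp \<mu> * ((1 - \<mu>) * ew \<theta>2 k + kv k v * ew \<theta>2 k)) UNIV"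
      unfolding T_def Zf_def
      by (rule infsum_diff_real[OF s1 summable_on_cmult_right[OF sA]])
    also have "infsum (\<lambda>k. exp \<mu> * ((1 - \<mu>) * ew \<theta>2 k + kv k v * ew \<theta>2 k)) UNIV
        = exp \<mu> * ((1 - \<mu>) * Zf \<theta>2 + \<mu> * Zf \<theta>2)"
      unfolding infsum_cmult_right' Zf_def
      using infsum_add[OF summable_on_cmult_right[OF s2, of "1 - \<mu>"] kvs(1)] kvs(2)
      by (simp add: infsum_cmult_right' Zf_def)
    finally show ?thesis .
  qed
  then have Teq2: "infsum T UNIV = Zf \<theta>1 - exp \<mu> * Zf \<theta>2" by (simp add: algebra_simps)
  have "\<exists>k. 0 < T k"
  proof (cases "\<mu> = 0")
    case False
    have "1 + - \<mu> < exp (- \<mu>)" using False by (intro exp_gt_1_plus) simp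
    then have "exp \<mu> * (1 - \<mu>) < exp \<mu> * exp (- \<mu>)" by simp
    also have "\<dots> = 1" by (simp flip: exp_add)
    finally have "0 < T (\<lambda>_. 0)" unfolding Teq by (simp add: ew_zero kv_zero_k)
    then show ?thesis by blast
  next
    case True
    have "v \<noteq> 0" using ne unfolding v_def by simp
    then obtain i where vi: "v $ i \<noteq> 0" by (auto simp: vec_eq_iff)
    have "1 + v $ i < exp (v $ i)" by (rule exp_gt_1_plus[OF vi])
    then have "0 < T (unit i)" unfolding Teq True using ew_pos[of \<theta>2 "unit i"]
      by (simp add: kv_unit)
    then show ?thesis by blast
  qed
  then obtain k0 where "0 < T k0" by blast
  then have "0 < infsum T UNIV" using infsum_pos_term[OF Tsum Tnn] by blast
  then show ?thesis using Teq2 unfolding \<mu>_def v_def by (simp add: mult.commute)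
qed

lemma mono_strict:
  assumes g1: "good \<theta>1" and g2: "good \<theta>2" and ne: "\<theta>1 \<noteq> \<theta>2"
  shows "0 < (\<Sum>i\<in>UNIV. (\<theta>1 - \<theta>2) $ i * (mn \<theta>1 i - mn \<theta>2 i))"
proof -
  define a where "a = (\<Sum>i\<in>UNIV. (\<theta>1 - \<theta>2) $ i * mn \<theta>2 i)"
  define b where "b = (\<Sum>i\<in>UNIV. (\<theta>2 - \<theta>1) $ i * mn \<theta>1 i)"
  have s1: "ew \<theta>1 summable_on UNIV" and s2: "ew \<theta>2 summable_on UNIV" using g1 g2 unfolding good_def by auto
  have A: "Zf \<theta>2 * exp a < Zf \<theta>1" unfolding a_def by (rule jensen_strict[OF g2 s1 ne])
  have B: "Zf \<theta>1 * exp b < Zf \<theta>2" unfolding b_def by (rule jensen_strict[OF g1 s2 ne[symmetric]])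
  have Z1: "0 < Zf \<theta>1" by (rule Zf_pos[OF s1])
  have c: "Zf \<theta>1 * exp b * exp a < Zf \<theta>2 * exp a" using B by simp
  have c2: "Zf \<theta>1 * exp b * exp a < Zf \<theta>1" using c A by linarith
  then have "Zf \<theta>1 * (exp b * exp a) < Zf \<theta>1 * 1" by (simp add: mult.assoc)
  then have "exp (b + a) < 1" using Z1 by (simp add: exp_add mult.commute)
  then have "b + a < 0" by simp
  moreover have "b + a = - (\<Sum>i\<in>UNIV. (\<theta>1 - \<theta>2) $ i * (mn \<theta>1 i - mn \<theta>2 i))"
    unfolding a_def b_def by (simp add: algebra_simps sum.distrib[symmetric] sum_negf[symmetric])
  ultimately show ?thesis by linarith
qed

lemma mn_inj:
  assumes "good \<theta>1" "good \<theta>2" "\<And>i. mn \<theta>1 i = mn \<theta>2 i"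
  shows "\<theta>1 = \<theta>2"
  using mono_strict[OF assms(1,2)] assms(3) by force

end

definition Lv :: "real^'n::finite \<Rightarrow> real^'n" where "Lv \<phi> = (\<chi> i. ln (\<phi> $ i))"
definition Ev :: "real^'n::finite \<Rightarrow> real^'n" where "Ev \<theta> = (\<chi> i. exp (\<theta> $ i))"

lemma Ev_Lv: "(\<And>i. 0 < \<phi> $ i) \<Longrightarrow> Ev (Lv \<phi>) = \<phi>"
  by (simp add: Ev_def Lv_def vec_eq_iff)
lemma Lv_Ev: "Lv (Ev \<theta>) = \<theta>"
  by (simp add: Ev_def Lv_def vec_eq_iff)
lemma Ev_pos: "0 < Ev \<theta> $ i"
  by (simp add: Ev_def)

definition inc :: "('n \<Rightarrow> nat) \<Rightarrow> 'n \<Rightarrow> ('n \<Rightarrow> nat)" where "inc k i = k(i := Suc (k i))"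

lemma dec_inc: "dec (inc k i) i = k" by (simp add: dec_def inc_def)
lemma inc_dec: "0 < k i \<Longrightarrow> inc (dec k i) i = k" by (auto simp: dec_def inc_def fun_eq_iff)
lemma inj_inc: "inj (\<lambda>k. inc k i)" by (metis dec_inc injI)
lemma kv_inc: "kv (inc k i) h = kv k h + h $ i"
proof -
  have "kv (inc k i) h = (\<Sum>j\<in>UNIV. real (k j) * h $ j + (if j = i then h $ i else 0))"
    unfolding kv_def by (rule sum.cong) (auto simp: inc_def algebra_simps)
  also have "\<dots> = kv k h + h $ i" by (simp add: sum.distrib kv_def)
  finally show ?thesis .
qed

context zrp begin

lemma wt_ew: "wt g (Ev \<theta>) = ew \<theta>"
  using wt_Ev unfolding Ev_def by auto

lemma Zpart_Ev: "Zpart g (Ev \<theta>) = Zf \<theta>"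
  by (simp add: Zpart_def Zf_def wt_ew)

lemma Efug_Ev: "Efug g (Ev \<theta>) f = infsum (\<lambda>k. f k * ew \<theta> k) UNIV / Zf \<theta>"
  by (simp add: Efug_def Zpart_Ev wt_ew)

lemma fug_iff: "is_fugacity g a (Ev \<theta>) \<longleftrightarrow> good \<theta> \<and> (\<forall>i. mn \<theta> i = a $ i)"
  unfolding is_fugacity_def good_def wt_ew Efug_Ev mn_def Nf_def
  using Ev_pos less_imp_le by (auto simp: mult.commute)

lemma fug_pos:
  assumes f: "is_fugacity g a \<phi>" and ai: "0 < a $ i"
  shows "0 < \<phi> $ i"
proof (rule ccontr)
  assume "\<not> 0 < \<phi> $ i"
  with f have z: "\<phi> $ i = 0" unfolding is_fugacity_def by (meson antisym not_le)
  have "real (k i) * wt g \<phi> k = 0" for k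
  proof (cases "k i = 0")
    case False
    then have "(\<phi> $ i) ^ k i = 0" using z by simp
    then have "(\<Prod>j\<in>UNIV. (\<phi> $ j) ^ k j) = 0"
      by (intro prod_zero) auto
    then show ?thesis by (simp add: wt_def)
  qed simp
  then have "infsum (\<lambda>k. real (k i) * wt g \<phi> k) UNIV = 0" by (simp add: infsum_0)
  then have "Efug g \<phi> (\<lambda>k. real (k i)) = 0" by (simp add: Efug_def)
  then show False using f ai unfolding is_fugacity_def by auto
qed

lemma fug_Ev:
  assumes f: "is_fugacity g a \<phi>" and pos: "\<And>i. 0 < a $ i"
  shows "\<phi> = Ev (Lv \<phi>)" "good (Lv \<phi>)" "\<And>i. mn (Lv \<phi>) i = a $ i"
proof -
  show e: "\<phi> = Ev (Lv \<phi>)" using fug_pos[OF f pos] Ev_Lv by metis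
  have "is_fugacity g a (Ev (Lv \<phi>))" using f e by simp
  then show "good (Lv \<phi>)" "\<And>i. mn (Lv \<phi>) i = a $ i" unfolding fug_iff by auto
qed

lemma fug_unique:
  assumes pos: "\<And>i. 0 < a $ i" and f1: "is_fugacity g a \<phi>1" and f2: "is_fugacity g a \<phi>2"
  shows "\<phi>1 = \<phi>2"
proof -
  have "Lv \<phi>1 = Lv \<phi>2"
    by (rule mn_inj) (use fug_Ev[OF f1 pos] fug_Ev[OF f2 pos] in auto)
  then show ?thesis using fug_Ev(1)[OF f1 pos] fug_Ev(1)[OF f2 pos] by metis
qed

lemma Phi_eq:
  assumes pos: "\<And>i. 0 < a $ i" and f: "is_fugacity g a \<phi>"
  shows "Phi g a = \<phi>"
  unfolding Phi_def
proof (rule the_equality)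
  show "is_fugacity g a \<phi>" by (rule f)
  fix \<psi> assume "is_fugacity g a \<psi>"
  then show "\<psi> = \<phi>" using fug_unique[OF pos _ f] by blast
qed

lemma gi_sum: "infsum (\<lambda>k. g i k * ew \<theta> k) UNIV = exp (\<theta> $ i) * Zf \<theta>"
proof -
  have "infsum (\<lambda>k. g i k * ew \<theta> k) UNIV = infsum (\<lambda>k. g i k * ew \<theta> k) (range (\<lambda>k. inc k i))"
  proof (rule infsum_cong_neutral)
    fix x assume "x \<in> UNIV - range (\<lambda>k. inc k i)"
    then have "x i = 0" using inc_dec[of x i] by (metis DiffD2 gr0I rangeI)
    then show "g i x * ew \<theta> x = 0" using zr unfolding zr_rates_def by simp
  qed auto
  also have "\<dots> = infsum ((\<lambda>k. g i k * ew \<theta> k) \<circ> (\<lambda>k. inc k i)) UNIV"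
    by (rule infsum_reindex) (use inj_inc in \<open>simp add: inj_on_def\<close>)
  also have "\<dots> = infsum (\<lambda>k. exp (\<theta> $ i) * ew \<theta> k) UNIV"
  proof (rule infsum_cong)
    fix k
    have pos: "0 < g i (inc k i)" using zr unfolding zr_rates_def by (simp add: inc_def)
    have "gfact g (inc k i) = g i (inc k i) * gfact g k"
      using gfact_step[of "inc k i" i] by (simp add: inc_def dec_inc[unfolded inc_def])
    then show "((\<lambda>k. g i k * ew \<theta> k) \<circ> (\<lambda>k. inc k i)) k = exp (\<theta> $ i) * ew \<theta> k"
      using pos gfact_pos[of k] by (simp add: ew_def kv_inc exp_add field_simps)
  qed
  also have "\<dots> = exp (\<theta> $ i) * Zf \<theta>" by (simp add: infsum_cmult_right' Zf_def)
  finally show ?thesis .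
qed

lemma Efug_gi: "ew \<theta> summable_on UNIV \<Longrightarrow> Efug g (Ev \<theta>) (g i) = exp (\<theta> $ i)"
  using gi_sum[of i \<theta>] Zf_pos[of \<theta>] by (simp add: Efug_Ev)

lemma Enu_facts:
  assumes pos: "\<And>i. 0 < a $ i" and f: "is_fugacity g a (Ev \<theta>)"
  shows "gtilde g i a = exp (\<theta> $ i)" "Gamma g a i j = Gm \<theta> i j"
proof -
  have P: "Phi g a = Ev \<theta>" by (rule Phi_eq[OF pos f])
  have gd: "good \<theta>" using f fug_iff by auto
  then have s: "ew \<theta> summable_on UNIV" unfolding good_def by auto
  show "gtilde g i a = exp (\<theta> $ i)" unfolding gtilde_def Enu_def P using Efug_gi[OF s] .
  show "Gamma g a i j = Gm \<theta> i j"
    unfolding Gamma_def Enu_def P Efug_Ev Gm_def mn_def Mf_def Nf_def by (simp add: mult_ac)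
qed

end

context zrp begin

definition DZ :: "(real^'n) set" where "DZ = {\<theta>. ew \<theta> summable_on UNIV}"

lemma convex_DZ: "convex DZ"
  unfolding convex_alt DZ_def
proof (intro ballI allI impI, simp only: mem_Collect_eq)
  fix x y :: "real^'n" and u :: real
  assume x: "ew x summable_on UNIV" and y: "ew y summable_on UNIV" and u: "0 \<le> u \<and> u \<le> 1"
  have le: "ew ((1 - u) *\<^sub>R x + u *\<^sub>R y) k \<le> (1 - u) * ew x k + u * ew y k" for k
  proof -
    have "exp (kv k ((1 - u) *\<^sub>R x + u *\<^sub>R y)) = exp ((1 - u) *\<^sub>R kv k x + u *\<^sub>R kv k y)"
      by (simp add: kv_add kv_scale)
    also have "\<dots> \<le> (1 - u) * exp (kv k x) + u * exp (kv k y)"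
      using convex_onD[OF exp_convex, of u "kv k x" "kv k y"] u by simp
    finally have "exp (kv k ((1 - u) *\<^sub>R x + u *\<^sub>R y)) / gfact g k
        \<le> ((1 - u) * exp (kv k x) + u * exp (kv k y)) / gfact g k"
      by (rule divide_right_mono) (use gfact_pos[of k] in simp)
    then show ?thesis unfolding ew_def by (simp add: add_divide_distrib)
  qed
  show "ew ((1 - u) *\<^sub>R x + u *\<^sub>R y) summable_on UNIV"
    by (rule summable_on_comparison_test[OF summable_on_add[OF summable_on_cmult_right[OF x] summable_on_cmult_right[OF y]]])
       (use le ew_nonneg in auto)
qed

lemma theta0_Sop:
  assumes int: "a0 \<in> interior (Phi_dom g)" and pos: "\<And>i. 0 < a0 $ i"
    and g0: "good \<theta>0" and m0: "\<And>i. mn \<theta>0 i = a0 $ i"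
  shows "\<theta>0 \<in> Sop"
proof (rule ccontr)
  assume nS: "\<theta>0 \<notin> Sop"
  define E where "E = {\<theta>0 - \<theta> + t *\<^sub>R one | \<theta> t. \<theta> \<in> DZ \<and> 0 < t}"
  have cE: "convex E"
    unfolding convex_alt
  proof (intro ballI allI impI)
    fix x y :: "real^'n" and u :: real
    assume x: "x \<in> E" and y: "y \<in> E" and u: "0 \<le> u \<and> u \<le> 1"
    obtain \<theta>1 t1 where 1: "x = \<theta>0 - \<theta>1 + t1 *\<^sub>R one" "\<theta>1 \<in> DZ" "0 < t1" using x E_def by auto
    obtain \<theta>2 t2 where 2: "y = \<theta>0 - \<theta>2 + t2 *\<^sub>R one" "\<theta>2 \<in> DZ" "0 < t2" using y E_def by auto
    have th: "(1 - u) *\<^sub>R \<theta>1 + u *\<^sub>R \<theta>2 \<in> DZ" using convex_DZ 1(2) 2(2) u unfolding convex_alt by blast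
    have t: "0 < (1 - u) * t1 + u * t2"
    proof (cases "u = 0")
      case True then show ?thesis using 1(3) by simp
    next
      case False then have "0 < u * t2" using u 2(3) by simp
      moreover have "0 \<le> (1 - u) * t1" using u 1(3) by simp
      ultimately show ?thesis by linarith
    qed
    have "(1 - u) *\<^sub>R x + u *\<^sub>R y = \<theta>0 - ((1 - u) *\<^sub>R \<theta>1 + u *\<^sub>R \<theta>2) + ((1 - u) * t1 + u * t2) *\<^sub>R one"
      unfolding 1(1) 2(1) by (simp add: algebra_simps scaleR_add_left)
    then show "(1 - u) *\<^sub>R x + u *\<^sub>R y \<in> E" unfolding E_def using th t by blast
  qed
  have zE: "0 \<notin> E"
  proof
    assume "0 \<in> E"
    then obtain \<theta> t where "0 = \<theta>0 - \<theta> + t *\<^sub>R one" "\<theta> \<in> DZ" "0 < t" unfolding E_def by auto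
    then have "\<theta> = \<theta>0 + t *\<^sub>R one" by (simp add: algebra_simps)
    then have "\<theta>0 \<in> Sop" using \<open>\<theta> \<in> DZ\<close> \<open>0 < t\<close> unfolding Sop_def DZ_def by auto
    then show False using nS by simp
  qed
  obtain a where a0: "a \<noteq> 0" and aE: "\<forall>x\<in>E. 0 \<le> inner a x"
    using separating_hyperplane_set_0[OF cE zE] by blast
  have sep: "inner a (\<theta> - \<theta>0) \<le> 0" if "\<theta> \<in> DZ" for \<theta>
  proof (rule ccontr)
    assume "\<not> inner a (\<theta> - \<theta>0) \<le> 0"
    then have d: "0 < inner a (\<theta> - \<theta>0)" by simp
    define t where "t = inner a (\<theta> - \<theta>0) / (2 * (\<bar>inner a one\<bar> + 1))"
    have t0: "0 < t" unfolding t_def using d by (simp add: add_pos_nonneg)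
    have "\<theta>0 - \<theta> + t *\<^sub>R one \<in> E" unfolding E_def using that t0 by blast
    then have "0 \<le> inner a (\<theta>0 - \<theta> + t *\<^sub>R one)" using aE by blast
    then have "inner a (\<theta> - \<theta>0) \<le> t * inner a one" by (simp add: inner_diff_right inner_add_right)
    also have "\<dots> \<le> t * \<bar>inner a one\<bar>" using t0 by (simp add: mult_left_mono)
    also have "\<dots> < inner a (\<theta> - \<theta>0)"
    proof -
      have "t * \<bar>inner a one\<bar> = inner a (\<theta> - \<theta>0) * (\<bar>inner a one\<bar> / (2 * (\<bar>inner a one\<bar> + 1)))"
        unfolding t_def by simp
      moreover have q1: "\<bar>inner a one\<bar> / (2 * (\<bar>inner a one\<bar> + 1)) < 1" by (simp add: field_simps)
      moreover have "inner a (\<theta> - \<theta>0) * (\<bar>inner a one\<bar> / (2 * (\<bar>inner a one\<bar> + 1))) < inner a (\<theta> - \<theta>0) * 1"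
        by (rule mult_strict_left_mono[OF q1 d])
      ultimately show ?thesis by linarith
    qed
    finally show False by simp
  qed
  obtain r where r: "0 < r" "ball a0 r \<subseteq> Phi_dom g" using int mem_interior by blast
  define m where "m = Min (range (\<lambda>i. a0 $ i))"
  have mpos: "0 < m" unfolding m_def using pos by (simp add: finite_imageI)
  have mle: "m \<le> a0 $ i" for i unfolding m_def by (rule Min_le) auto
  define \<delta> where "\<delta> = min r m / (2 * norm a)"
  have na: "0 < norm a" using a0 by simp
  have \<delta>0: "0 < \<delta>" unfolding \<delta>_def using r mpos na by simp
  have \<delta>n: "\<delta> * norm a < min r m" unfolding \<delta>_def using r mpos na by (simp add: min_def)
  define a' where "a' = a0 + \<delta> *\<^sub>R a"
  have "dist a0 a' < r" unfolding a'_def dist_norm using \<delta>n \<delta>0 by simp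
  then have "a' \<in> Phi_dom g" using r by auto
  then obtain \<phi> where f: "is_fugacity g a' \<phi>" unfolding Phi_dom_def by auto
  have pos': "0 < a' $ i" for i
  proof -
    have "\<bar>a $ i\<bar> \<le> norm a" by (rule component_le_norm_cart)
    then have h1: "\<delta> * \<bar>a $ i\<bar> \<le> \<delta> * norm a" using \<delta>0 by (intro mult_left_mono) auto
    have h2: "\<bar>\<delta> * a $ i\<bar> = \<delta> * \<bar>a $ i\<bar>" using \<delta>0 by (simp add: abs_mult)
    have "\<bar>\<delta> * a $ i\<bar> < m" using h1 h2 \<delta>n by linarith
    then show ?thesis using mle[of i] unfolding a'_def by simp
  qed
  define \<theta>' where "\<theta>' = Lv \<phi>"
  have g': "good \<theta>'" and m': "\<And>i. mn \<theta>' i = a' $ i" using fug_Ev[OF f pos'] unfolding \<theta>'_def by auto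
  have ne: "\<theta>' \<noteq> \<theta>0"
  proof
    assume "\<theta>' = \<theta>0"
    then have "a' = a0" using m' m0 by (metis vec_eq_iff)
    then show False using a0 \<delta>0 unfolding a'_def by simp
  qed
  have "0 < (\<Sum>i\<in>UNIV. (\<theta>' - \<theta>0) $ i * (mn \<theta>' i - mn \<theta>0 i))" by (rule mono_strict[OF g' g0 ne])
  also have "\<dots> = \<delta> * inner a (\<theta>' - \<theta>0)"
    using m' m0 unfolding a'_def inner_vec_def by (simp add: sum_distrib_left algebra_simps)
  also have "\<dots> \<le> 0"
    using sep[of \<theta>'] g' \<delta>0 unfolding DZ_def good_def by (simp add: mult_nonneg_nonpos)
  finally show False by simp
qed

end

context zrp begin

lemma mn_pos:
  assumes "good \<theta>" shows "0 < mn \<theta> i"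
proof -
  have s: "(\<lambda>k. real (k i) * ew \<theta> k) summable_on UNIV" and s0: "ew \<theta> summable_on UNIV"
    using assms unfolding good_def by auto
  have "0 < Nf i \<theta>" unfolding Nf_def
    by (rule infsum_pos_term[OF s, of "unit i"]) (auto simp: ew_pos unit_def intro!: mult_nonneg_nonneg ew_nonneg)
  then show ?thesis unfolding mn_def using Zf_pos[OF s0] by simp
qed

lemma Gm_inj:
  assumes S: "\<theta> \<in> Sop" and T0: "\<And>i. (\<Sum>j\<in>UNIV. Gm \<theta> i j * x $ j) = 0"
  shows "x = 0"
proof (rule ccontr)
  assume nz: "x \<noteq> 0"
  obtain \<epsilon> where eps: "0 < \<epsilon>" and Se: "ew (\<theta> + \<epsilon> *\<^sub>R one) summable_on UNIV"
    using S unfolding Sop_def by auto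
  have gd: "good \<theta>" by (rule Sop_good[OF S])
  have s0: "ew \<theta> summable_on UNIV" using gd unfolding good_def by auto
  have Zp: "0 < Zf \<theta>" by (rule Zf_pos[OF s0])
  define \<mu> where "\<mu> = (\<Sum>i\<in>UNIV. x $ i * mn \<theta> i)"
  have s2: "(\<lambda>k. real (k i) * real (k j) * ew \<theta> k) summable_on UNIV" for i j
  proof (rule poly_summable[OF eps Se, where B = 1 and p = 2])
    fix k
    have "real (k i) * real (k j) \<le> (1 + sz k) * (1 + sz k)"
      using k_le_1sz[of k i] k_le_1sz[of k j] by (intro mult_mono) auto
    then have "real (k i) * real (k j) * ew \<theta> k \<le> (1 + sz k) ^ 2 * ew \<theta> k"
      using ew_nonneg[of \<theta> k] by (simp add: power2_eq_square mult_right_mono)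
    then show "\<bar>real (k i) * real (k j) * ew \<theta> k\<bar> \<le> 1 * (1 + sz k) ^ 2 * ew \<theta> k"
      using ew_nonneg[of \<theta> k] by simp
  qed
  define X where "X = (\<Sum>i\<in>UNIV. \<Sum>j\<in>UNIV. x $ i * x $ j * Mf i j \<theta>)"
  have kv2: "(\<lambda>k. (kv k x)^2 * ew \<theta> k) summable_on UNIV \<and> infsum (\<lambda>k. (kv k x)^2 * ew \<theta> k) UNIV = X"
  proof -
    have inner: "(\<lambda>k. \<Sum>j\<in>UNIV. x $ i * x $ j * (real (k i) * real (k j) * ew \<theta> k)) summable_on UNIV \<and>
        infsum (\<lambda>k. \<Sum>j\<in>UNIV. x $ i * x $ j * (real (k i) * real (k j) * ew \<theta> k)) UNIV
        = (\<Sum>j\<in>UNIV. x $ i * x $ j * Mf i j \<theta>)" for i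
      using summable_on_finsum[of UNIV "\<lambda>j k. x $ i * x $ j * (real (k i) * real (k j) * ew \<theta> k)" UNIV]
        summable_on_cmult_right[OF s2]
      by (simp add: infsum_cmult_right' Mf_def)
    have outer: "(\<lambda>k. \<Sum>i\<in>UNIV. \<Sum>j\<in>UNIV. x $ i * x $ j * (real (k i) * real (k j) * ew \<theta> k)) summable_on UNIV \<and>
        infsum (\<lambda>k. \<Sum>i\<in>UNIV. \<Sum>j\<in>UNIV. x $ i * x $ j * (real (k i) * real (k j) * ew \<theta> k)) UNIV = X"
      using summable_on_finsum[of UNIV "\<lambda>i k. \<Sum>j\<in>UNIV. x $ i * x $ j * (real (k i) * real (k j) * ew \<theta> k)" UNIV]
        inner unfolding X_def by simp
    have eq: "(\<lambda>k. (kv k x)^2 * ew \<theta> k) = (\<lambda>k. \<Sum>i\<in>UNIV. \<Sum>j\<in>UNIV. x $ i * x $ j * (real (k i) * real (k j) * ew \<theta> k))"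
    proof
      fix k
      have "(kv k x)^2 = (\<Sum>i\<in>UNIV. \<Sum>j\<in>UNIV. (real (k i) * x $ i) * (real (k j) * x $ j))"
        by (simp add: kv_def power2_eq_square sum_product)
      then have "(kv k x)^2 * ew \<theta> k = (\<Sum>i\<in>UNIV. \<Sum>j\<in>UNIV. (real (k i) * x $ i) * (real (k j) * x $ j) * ew \<theta> k)"
        by (simp add: sum_distrib_right)
      also have "\<dots> = (\<Sum>i\<in>UNIV. \<Sum>j\<in>UNIV. x $ i * x $ j * (real (k i) * real (k j) * ew \<theta> k))"
        by (intro sum.cong refl) (simp add: mult_ac)
      finally show "(kv k x)^2 * ew \<theta> k = (\<Sum>i\<in>UNIV. \<Sum>j\<in>UNIV. x $ i * x $ j * (real (k i) * real (k j) * ew \<theta> k))" .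
    qed
    show ?thesis unfolding eq using outer .
  qed
  have kv1: "(\<lambda>k. kv k x * ew \<theta> k) summable_on UNIV" "infsum (\<lambda>k. kv k x * ew \<theta> k) UNIV = \<mu> * Zf \<theta>"
    using kv_moment[OF gd, of x] Zp unfolding \<mu>_def mn_def by (auto simp: sum_distrib_right)
  define Q where "Q k = (kv k x - \<mu>)^2 * ew \<theta> k" for k
  have Qeq: "Q k = ((kv k x)^2 * ew \<theta> k + \<mu>^2 * ew \<theta> k) - (2 * \<mu>) * (kv k x * ew \<theta> k)" for k
    unfolding Q_def by (simp add: power2_eq_square algebra_simps)
  have sA: "(\<lambda>k. (kv k x)^2 * ew \<theta> k + \<mu>^2 * ew \<theta> k) summable_on UNIV"
    using kv2 summable_on_cmult_right[OF s0] by (intro summable_on_add) auto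
  have sB: "(\<lambda>k. (2 * \<mu>) * (kv k x * ew \<theta> k)) summable_on UNIV"
    by (rule summable_on_cmult_right[OF kv1(1)])
  have Qsum: "Q summable_on UNIV" unfolding Qeq by (rule summable_on_diff_real[OF sA sB])
  have "infsum Q UNIV = (X + \<mu>^2 * Zf \<theta>) - 2 * \<mu> * (\<mu> * Zf \<theta>)"
  proof -
    have "infsum Q UNIV = infsum (\<lambda>k. (kv k x)^2 * ew \<theta> k + \<mu>^2 * ew \<theta> k) UNIV - infsum (\<lambda>k. (2 * \<mu>) * (kv k x * ew \<theta> k)) UNIV"
      unfolding Qeq by (rule infsum_diff_real[OF sA sB])
    also have "infsum (\<lambda>k. (kv k x)^2 * ew \<theta> k + \<mu>^2 * ew \<theta> k) UNIV = X + \<mu>^2 * Zf \<theta>"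
      using infsum_add[of "\<lambda>k. (kv k x)^2 * ew \<theta> k" UNIV "\<lambda>k. \<mu>^2 * ew \<theta> k"] kv2
        summable_on_cmult_right[OF s0]
      by (simp add: infsum_cmult_right' Zf_def)
    also have "infsum (\<lambda>k. (2 * \<mu>) * (kv k x * ew \<theta> k)) UNIV = 2 * \<mu> * (\<mu> * Zf \<theta>)"
      by (simp add: infsum_cmult_right' kv1(2))
    finally show ?thesis .
  qed
  moreover have "X / Zf \<theta> - \<mu>^2 = 0"
  proof -
    have "0 = (\<Sum>i\<in>UNIV. x $ i * (\<Sum>j\<in>UNIV. Gm \<theta> i j * x $ j))" using T0 by simp
    also have "\<dots> = (\<Sum>i\<in>UNIV. \<Sum>j\<in>UNIV. x $ i * x $ j * Mf i j \<theta> / Zf \<theta> - (x $ i * mn \<theta> i) * (x $ j * mn \<theta> j))"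
      unfolding Gm_def by (simp add: sum_distrib_left algebra_simps)
    also have "\<dots> = X / Zf \<theta> - \<mu>^2"
      unfolding X_def \<mu>_def by (simp add: sum_subtractf sum_divide_distrib power2_eq_square sum_product)
    finally show ?thesis by simp
  qed
  ultimately have Q0: "infsum Q UNIV = 0" using Zp by (simp add: field_simps power2_eq_square)
  have Qnn: "0 \<le> Q k" for k unfolding Q_def using ew_nonneg[of \<theta> k] by simp
  have "\<exists>k. 0 < Q k"
  proof (cases "\<mu> = 0")
    case False
    then have "0 < Q (\<lambda>_. 0)" unfolding Q_def by (simp add: kv_zero_k ew_zero)
    then show ?thesis by blast
  next
    case True
    obtain i where "x $ i \<noteq> 0" using nz by (auto simp: vec_eq_iff)
    then have "0 < Q (unit i)" unfolding Q_def True using ew_pos[of \<theta> "unit i"] by (simp add: kv_unit)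
    then show ?thesis by blast
  qed
  then obtain k where "0 < Q k" by blast
  then have "0 < infsum Q UNIV" by (rule infsum_pos_term[OF Qsum Qnn])
  then show False using Q0 by simp
qed

end

context zrp begin

lemma main_locale:
  fixes a0 :: "real^'n"
  assumes pos: "\<And>i. 0 < a0 $ i" and int: "a0 \<in> interior (Phi_dom g)"
  shows "(FC g a0 \<longleftrightarrow>
           (\<forall>i j. i \<noteq> j \<longrightarrow> Gamma g a0 i j = 0) \<and>
           (\<exists>c. \<forall>i. gtilde g i a0 / Gamma g a0 i i = c))
       \<and> (\<forall>lam. FC_with g a0 lam \<longrightarrow> (\<forall>i. gtilde g i a0 / Gamma g a0 i i = lam))"
proof -
  have "a0 \<in> Phi_dom g" using int interior_subset by blast
  then obtain \<phi>0 where f0: "is_fugacity g a0 \<phi>0" unfolding Phi_dom_def by auto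
  define \<theta>0 where "\<theta>0 = Lv \<phi>0"
  have e0: "\<phi>0 = Ev \<theta>0" and g0: "good \<theta>0" and m0: "\<And>i. mn \<theta>0 i = a0 $ i"
    using fug_Ev[OF f0 pos] unfolding \<theta>0_def by auto
  have S0: "\<theta>0 \<in> Sop" by (rule theta0_Sop[OF int pos g0 m0])
  have f0': "is_fugacity g a0 (Ev \<theta>0)" using f0 e0 by simp
  have gt0: "gtilde g i a0 = exp (\<theta>0 $ i)" for i using Enu_facts(1)[OF pos f0'] .
  have Ga: "Gamma g a0 i j = Gm \<theta>0 i j" for i j using Enu_facts(2)[OF pos f0'] .
  define T where "T h = (\<chi> i. \<Sum>j\<in>UNIV. Gm \<theta>0 i j * h $ j)" for h :: "real^'n"
  have linT: "linear T" unfolding T_def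
    by (rule linearI) (simp_all add: vec_eq_iff algebra_simps sum.distrib sum_distrib_left)
  have injT: "inj T"
    unfolding linear_injective_0[OF linT]
  proof (intro allI impI)
    fix x assume "T x = 0"
    then have "\<And>i. (\<Sum>j\<in>UNIV. Gm \<theta>0 i j * x $ j) = 0" unfolding T_def by (simp add: vec_eq_iff)
    then show "x = 0" by (rule Gm_inj[OF S0])
  qed
  obtain Ti where linTi: "linear Ti" and TiT: "\<And>x. Ti (T x) = x" and TTi: "\<And>x. T (Ti x) = x"
    using eucl.linear_injective_isomorphism[OF linT injT] by auto
  define G where "G a = Lv (Phi g a)" for a
  have Gtau: "G (tau \<theta>) = \<theta>" if "\<theta> \<in> Sop" for \<theta>
  proof -
    have gd: "good \<theta>" by (rule Sop_good[OF that])
    have tp: "0 < tau \<theta> $ i" for i unfolding tau_def using mn_pos[OF gd] by simp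
    have "is_fugacity g (tau \<theta>) (Ev \<theta>)" unfolding fug_iff tau_def using gd by simp
    then have "Phi g (tau \<theta>) = Ev \<theta>" by (rule Phi_eq[OF tp])
    then show ?thesis unfolding G_def by (simp add: Lv_Ev)
  qed
  have tau0: "tau \<theta>0 = a0" unfolding tau_def using m0 by (simp add: vec_eq_iff)
  have dtau: "(tau has_derivative T) (at \<theta>0)" unfolding T_def by (rule tau_deriv[OF S0])
  have dG: "(G has_derivative Ti) (at a0)"
    using has_derivative_inverse_strong[OF open_Sop S0 tau_cont Gtau dtau, of Ti] TTi tau0
    by (simp add: fun_eq_iff comp_def)
  obtain r where r: "0 < r" "ball a0 r \<subseteq> Phi_dom g" using int mem_interior by blast
  define m where "m = Min (range (\<lambda>i. a0 $ i))"
  have mpos: "0 < m" unfolding m_def using pos by (simp add: finite_imageI)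
  have mle: "m \<le> a0 $ i" for i unfolding m_def by (rule Min_le) auto
  define U where "U = ball a0 (min r m)"
  have gloc: "gtilde g i a = exp (G a $ i)" if "a \<in> U" for a i
  proof -
    have "a \<in> Phi_dom g" using that r unfolding U_def by auto
    then obtain \<phi> where f: "is_fugacity g a \<phi>" unfolding Phi_dom_def by auto
    have ap: "0 < a $ j" for j
    proof -
      have "\<bar>(a0 - a) $ j\<bar> \<le> norm (a0 - a)" by (rule component_le_norm_cart)
      also have "\<dots> < m" using that unfolding U_def by (simp add: dist_norm)
      finally show ?thesis using mle[of j] by simp
    qed
    have e: "\<phi> = Ev (Lv \<phi>)" using fug_Ev(1)[OF f ap] .
    have P: "Phi g a = \<phi>" by (rule Phi_eq[OF ap f])
    have "is_fugacity g a (Ev (Lv \<phi>))" using f e by simp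
    then have "gtilde g i a = exp (Lv \<phi> $ i)" by (rule Enu_facts(1)[OF ap])
    then show ?thesis unfolding G_def P .
  qed
  have dgt: "(gtilde g i has_derivative (\<lambda>h. exp (\<theta>0 $ i) * Ti h $ i)) (at a0)" for i
  proof -
    have d1: "((\<lambda>a. G a $ i) has_derivative (\<lambda>h. Ti h $ i)) (at a0)"
      by (rule bounded_linear.has_derivative[OF bounded_linear_vec_nth dG])
    have "((\<lambda>a. exp (G a $ i)) has_derivative (\<lambda>h. Ti h $ i * exp (G a0 $ i))) (at a0)"
      by (rule has_derivative_exp[OF d1])
    moreover have "G a0 = \<theta>0" using Gtau[OF S0] tau0 by simp
    ultimately have d2: "((\<lambda>a. exp (G a $ i)) has_derivative (\<lambda>h. exp (\<theta>0 $ i) * Ti h $ i)) (at a0)"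
      by (simp add: mult.commute)
    show ?thesis
      by (rule has_derivative_transform_within_open[OF d2, of U])
         (use r mpos gloc in \<open>auto simp: U_def\<close>)
  qed
  define P where "P i j = exp (\<theta>0 $ i) * Ti (axis j 1) $ i" for i j
  have partial_iff: "has_partial (gtilde g i) j c a0 \<longleftrightarrow> c = P i j" for i j c
  proof -
    have dl: "((\<lambda>t. a0 + t *\<^sub>R axis j (1::real)) has_derivative (\<lambda>t. t *\<^sub>R axis j 1)) (at 0)"
      by (intro derivative_eq_intros) auto
    have "((\<lambda>t. gtilde g i (a0 + t *\<^sub>R axis j 1)) has_derivative
        (\<lambda>t. exp (\<theta>0 $ i) * Ti (t *\<^sub>R axis j 1) $ i)) (at 0)"
      using has_derivative_compose[OF dl, of "gtilde g i"] dgt[of i] by simp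
    moreover have "(\<lambda>t. exp (\<theta>0 $ i) * Ti (t *\<^sub>R axis j 1) $ i) = (*) (P i j)"
      using linTi unfolding P_def by (simp add: fun_eq_iff linear_scale mult_ac)
    ultimately have D: "((\<lambda>t. gtilde g i (a0 + t *\<^sub>R axis j 1)) has_real_derivative P i j) (at 0)"
      unfolding has_field_derivative_def by simp
    show ?thesis unfolding has_partial_def using D DERIV_unique by blast
  qed
  have FCw: "FC_with g a0 lam \<longleftrightarrow> (\<forall>i j. P i j = (if i = j then lam else 0))" for lam
    unfolding FC_with_def partial_iff by auto
  have phipos: "0 < exp (\<theta>0 $ i)" for i by simp
  have Taxis: "T (c *\<^sub>R axis j 1) = (\<chi> i. Gm \<theta>0 i j * c)" for c j
  proof -
    have "(\<Sum>l\<in>UNIV. Gm \<theta>0 i l * (c *\<^sub>R axis j 1) $ l) = Gm \<theta>0 i j * c" for i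
    proof -
      have "(\<Sum>l\<in>UNIV. Gm \<theta>0 i l * (c *\<^sub>R axis j 1) $ l) = (\<Sum>l\<in>UNIV. if l = j then Gm \<theta>0 i j * c else 0)"
        by (rule sum.cong) (auto simp: axis_def)
      then show ?thesis by simp
    qed
    then show ?thesis unfolding T_def by (simp add: vec_eq_iff)
  qed
  have A: "lam \<noteq> 0 \<and> (\<forall>i j. i \<noteq> j \<longrightarrow> Gm \<theta>0 i j = 0) \<and> (\<forall>i. exp (\<theta>0 $ i) / Gm \<theta>0 i i = lam)"
    if H: "\<forall>i j. P i j = (if i = j then lam else 0)" for lam
  proof -
    have TiE: "Ti (axis j 1) = (lam / exp (\<theta>0 $ j)) *\<^sub>R axis j 1" for j
    proof -
      have "Ti (axis j 1) $ i = (if i = j then lam / exp (\<theta>0 $ j) else 0)" for i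
      proof (cases "i = j")
        case True
        then have "exp (\<theta>0 $ j) * Ti (axis j 1) $ j = lam" using H unfolding P_def by auto
        then show ?thesis using True phipos[of j] by (simp add: eq_divide_eq mult.commute)
      next
        case False
        then have "exp (\<theta>0 $ i) * Ti (axis j 1) $ i = 0" using H unfolding P_def by auto
        then show ?thesis using False by simp
      qed
      then show ?thesis by (simp add: vec_eq_iff axis_def)
    qed
    have E: "axis j (1::real) = (\<chi> i. Gm \<theta>0 i j * (lam / exp (\<theta>0 $ j)))" for j
      using TTi[of "axis j 1"] unfolding TiE Taxis by simp
    have E2: "(if i = j then 1 else 0) = Gm \<theta>0 i j * (lam / exp (\<theta>0 $ j))" for i j
    proof -
      have "axis j (1::real) $ i = Gm \<theta>0 i j * (lam / exp (\<theta>0 $ j))"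
        by (subst E[of j]) (rule vec_lambda_beta)
      moreover have "axis j (1::real) $ i = (if i = j then 1 else 0)" by (simp add: axis_def)
      ultimately show ?thesis by simp
    qed
    have "(1::real) = Gm \<theta>0 undefined undefined * (lam / exp (\<theta>0 $ undefined))"
      using E2[of undefined undefined] by (simp only: simp_thms if_True)
    then have l0: "lam \<noteq> 0" by (cases "lam = 0") simp_all
    show ?thesis
    proof (intro conjI allI impI l0)
      fix i j :: 'n assume "i \<noteq> j"
      then show "Gm \<theta>0 i j = 0" using E2[of i j] l0 phipos[of j] by simp
    next
      fix i
      have e1: "1 = Gm \<theta>0 i i * (lam / exp (\<theta>0 $ i))" using E2[of i i] by (simp only: simp_thms if_True)
      have h: "Gm \<theta>0 i i * lam = exp (\<theta>0 $ i)"
      proof -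
        have "exp (\<theta>0 $ i) = exp (\<theta>0 $ i) * (Gm \<theta>0 i i * (lam / exp (\<theta>0 $ i)))"
          using e1 by (simp only: mult_1_right)
        also have "\<dots> = Gm \<theta>0 i i * lam" using phipos[of i] by simp
        finally show ?thesis by simp
      qed
      then have gm0: "Gm \<theta>0 i i \<noteq> 0" using phipos[of i] by auto
      show "exp (\<theta>0 $ i) / Gm \<theta>0 i i = lam" using h gm0 by (simp add: divide_eq_eq mult.commute)
    qed
  qed
  have B: "\<forall>i j. P i j = (if i = j then c else 0)"
    if off: "\<forall>i j. i \<noteq> j \<longrightarrow> Gm \<theta>0 i j = 0" and rat: "\<forall>i. exp (\<theta>0 $ i) / Gm \<theta>0 i i = c" for c
  proof (intro allI)
    fix i j
    have Tax: "T (b *\<^sub>R axis j 1) = (b * Gm \<theta>0 j j) *\<^sub>R axis j 1" for b j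
      unfolding Taxis using off by (auto simp: vec_eq_iff axis_def)
    have Gjj: "Gm \<theta>0 j j \<noteq> 0"
    proof
      assume "Gm \<theta>0 j j = 0"
      then have "T (1 *\<^sub>R axis j 1) = 0" using Tax[of 1 j] by simp
      then have "Ti (T (1 *\<^sub>R axis j 1)) = Ti 0" by simp
      then have "axis j (1::real) = 0" using TiT linear_0[OF linTi] by simp
      then show False by (simp add: axis_eq_0_iff)
    qed
    have cj: "c * Gm \<theta>0 j j = exp (\<theta>0 $ j)" using rat[rule_format, of j] Gjj by (auto simp: field_simps)
    have "T ((c / exp (\<theta>0 $ j)) *\<^sub>R axis j 1) = axis j 1"
      using Tax[of "c / exp (\<theta>0 $ j)" j] cj phipos[of j] by (simp add: field_simps)
    then have "Ti (axis j 1) = (c / exp (\<theta>0 $ j)) *\<^sub>R axis j 1" using TiT by metis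
    then show "P i j = (if i = j then c else 0)" unfolding P_def using phipos[of j]
      by (simp add: axis_def)
  qed
  show ?thesis
  proof
    show "FC g a0 \<longleftrightarrow> (\<forall>i j. i \<noteq> j \<longrightarrow> Gamma g a0 i j = 0) \<and> (\<exists>c. \<forall>i. gtilde g i a0 / Gamma g a0 i i = c)"
    proof
      assume "FC g a0"
      then obtain lam where "FC_with g a0 lam" unfolding FC_def by auto
      then have "lam \<noteq> 0 \<and> (\<forall>i j. i \<noteq> j \<longrightarrow> Gm \<theta>0 i j = 0) \<and> (\<forall>i. exp (\<theta>0 $ i) / Gm \<theta>0 i i = lam)"
        using A FCw by blast
      then show "(\<forall>i j. i \<noteq> j \<longrightarrow> Gamma g a0 i j = 0) \<and> (\<exists>c. \<forall>i. gtilde g i a0 / Gamma g a0 i i = c)"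
        unfolding Ga gt0 by blast
    next
      assume "(\<forall>i j. i \<noteq> j \<longrightarrow> Gamma g a0 i j = 0) \<and> (\<exists>c. \<forall>i. gtilde g i a0 / Gamma g a0 i i = c)"
      then obtain c where off: "\<forall>i j. i \<noteq> j \<longrightarrow> Gm \<theta>0 i j = 0" and rat: "\<forall>i. exp (\<theta>0 $ i) / Gm \<theta>0 i i = c"
        unfolding Ga gt0 by blast
      have "FC_with g a0 c" using B[OF off rat] FCw by blast
      then show "FC g a0" unfolding FC_def by blast
    qed
    show "\<forall>lam. FC_with g a0 lam \<longrightarrow> (\<forall>i. gtilde g i a0 / Gamma g a0 i i = lam)"
    proof (intro allI impI)
      fix lam i assume "FC_with g a0 lam"
      then have "\<forall>i. exp (\<theta>0 $ i) / Gm \<theta>0 i i = lam" using A FCw by blast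
      then show "gtilde g i a0 / Gamma g a0 i i = lam" unfolding Ga gt0 by blast
    qed
  qed
qed

end

theorem proposition4p2:
  fixes g :: "'n::finite \<Rightarrow> ('n \<Rightarrow> nat) \<Rightarrow> real" and a0 :: "real^'n"
  assumes "zr_rates g" and "INV g"
    and "\<forall>i. 0 < a0 $ i"
    and "a0 \<in> interior (Phi_dom g)"
  shows "(FC g a0 \<longleftrightarrow>
           (\<forall>i j. i \<noteq> j \<longrightarrow> Gamma g a0 i j = 0) \<and>
           (\<exists>c. \<forall>i. gtilde g i a0 / Gamma g a0 i i = c))
       \<and> (\<forall>lam. FC_with g a0 lam \<longrightarrow> (\<forall>i. gtilde g i a0 / Gamma g a0 i i = lam))"
proof -
  interpret zrp g by unfold_locales (use assms in auto)
  show ?thesis by (rule main_locale) (use assms in auto)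
qed


end
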